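(* Let $\mathcal P=\mathcal P(V,R)$ and $\mathcal Q=\mathcal P(W,S)$ be binary quadratic operads over a field $\Bbbk$ with $\dim V,\dim W<\infty$. Let $(e_i)_{i\in I}$ be a basis of $V$, $(f_j)_{j\in J}$ a basis of $W$, and $(e_i^\vee)_{i\in I}$ the dual basis of $V^\vee$. Write the operations of $\mathcal P^!$ as $e_i^\vee=x_1\circ^i x_2$, those of $\mathcal Q$ as $f_j=x_1*_j x_2$, and the generating operations $1_-\otimes e_i\otimes f_j\in\Bbbk_-\otimes V\otimes W$ of $\mathcal P\bullet\mathcal Q$ as $x_1*_{i,j}x_2$. Let $A$ be a vector space with bilinear operations $(\cdot*_{i,j}\cdot)$, $i\in I$, $j\in J$. For a $\mathcal P^!$-algebra $B$ equip $B\otimes A$ with the operations $$(p\otimes a)*_j(q\otimes b)=\sum_{i\in I}(p\circ^i q)\otimes(a*_{i,j}b),\quad p,q\in B,\ a,b\in A,\ j\in J.$$ Then $A$ is a $(\mathcal P\bullet\mathcal Q)$-algebra if and only if for every $\mathcal P^!$-algebra $B$ the space $B\otimes A$ with these operations is a $\mathcal Q$-algebra.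
   Context: A binary quadratic operad $\mathcal P(V,R)$ is generated by an $S_2$-module $V$ of binary operations subject to relations $R\subseteq\mathcal F_V(3)$, $\mathcal F_V$ the free operad. $\Bbbk_-$ is the sign representation of $S_2$, $V^\vee=V^*\otimes\Bbbk_-$, and $\mathcal P^!=\mathcal P(V^\vee,R^\perp)$ is the Koszul dual operad. $\mathcal P\bullet\mathcal Q$ is the Manin black product (Ginzburg–Kapranov): the binary quadratic operad generated by $\Bbbk_-\otimes V\otimes W$ whose relations are the image of $\Bbbk_-\otimes R\otimes S$ under the natural projection $\Bbbk_-\otimes\mathcal F_V(3)\otimes\mathcal F_W(3)\to\mathcal F_{\Bbbk_-\otimes V\otimes W}(3)$ (dual to the embedding of $\mathrm{Ind}_{S_2}^{S_3}((V^\vee\otimes W^\vee)\otimes(V^\vee\otimes W^\vee))$ into $\mathcal F_V(3)^\vee\otimes\mathcal F_W(3)^\vee$). *)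

theory Defs
  imports Complex_Main "HOL-Library.Poly_Mapping"
begin

text \<open>A binary quadratic operad P(V,R) over a field 'k with
 dim V finite is given in coordinates w.r.t. a basis (e_i) of V, indexed by a finite type 'i:
 \<^item> the S2-action on V is the matrix sig, sig i' i = coefficient of e_i' in (12).e_i;
 \<^item> F_V(3) has basis the tree monomials  e_i(e_k(x1,x2),x3), e_i(e_k(x2,x3),x1), e_i(e_k(x3,x1),x2)
   (shapes Sh1, Sh2, Sh3), so elements of F_V(3) are coefficient functions 'i => 'i => shape => 'k;
 \<^item> R is an S3-stable linear subspace of F_V(3).\<close>

datatype shape = Sh1 | Sh2 | Sh3

definition shapes :: "shape set" where "shapes = {Sh1, Sh2, Sh3}"

type_synonym ('i, 'k) tree3 = "'i \<Rightarrow> 'i \<Rightarrow> shape \<Rightarrow> 'k"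

fun tree_eval :: "('i \<Rightarrow> 'a \<Rightarrow> 'a \<Rightarrow> 'a) \<Rightarrow> 'i \<Rightarrow> 'i \<Rightarrow> shape \<Rightarrow> 'a \<Rightarrow> 'a \<Rightarrow> 'a \<Rightarrow> 'a" where
  "tree_eval m i k Sh1 x1 x2 x3 = m i (m k x1 x2) x3"
| "tree_eval m i k Sh2 x1 x2 x3 = m i (m k x2 x3) x1"
| "tree_eval m i k Sh3 x1 x2 x3 = m i (m k x3 x1) x2"

definition eval3 :: "('k \<Rightarrow> 'a::ab_group_add \<Rightarrow> 'a) \<Rightarrow> ('i::finite \<Rightarrow> 'a \<Rightarrow> 'a \<Rightarrow> 'a)
    \<Rightarrow> ('i, 'k) tree3 \<Rightarrow> 'a \<Rightarrow> 'a \<Rightarrow> 'a \<Rightarrow> 'a" where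
  "eval3 scale m r x1 x2 x3 =
     (\<Sum>i\<in>UNIV. \<Sum>k\<in>UNIV. \<Sum>c\<in>shapes. scale (r i k c) (tree_eval m i k c x1 x2 x3))"

definition bilinear_op :: "('k \<Rightarrow> 'a::ab_group_add \<Rightarrow> 'a) \<Rightarrow> ('a \<Rightarrow> 'a \<Rightarrow> 'a) \<Rightarrow> bool" where
  "bilinear_op scale f \<longleftrightarrow>
     (\<forall>x x' y. f (x + x') y = f x y + f x' y) \<and> (\<forall>c x y. f (scale c x) y = scale c (f x y)) \<and>
     (\<forall>x y y'. f x (y + y') = f x y + f x y') \<and> (\<forall>c x y. f x (scale c y) = scale c (f x y))"

text \<open>algebra over P(V,R): bilinear operations m i (one for each basis vector e_i), extended
 linearly to V, which are S2-equivariant ((sig.v)(x,y) = v(y,x)) and satisfy all relations in R\<close>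
definition is_algebra :: "('k::field \<Rightarrow> 'a::ab_group_add \<Rightarrow> 'a) \<Rightarrow> ('i::finite \<Rightarrow> 'i \<Rightarrow> 'k)
    \<Rightarrow> ('i, 'k) tree3 set \<Rightarrow> ('i \<Rightarrow> 'a \<Rightarrow> 'a \<Rightarrow> 'a) \<Rightarrow> bool" where
  "is_algebra scale sig R m \<longleftrightarrow>
     (\<forall>i. bilinear_op scale (m i)) \<and>
     (\<forall>i x y. (\<Sum>i'\<in>UNIV. scale (sig i' i) (m i' x y)) = m i y x) \<and>
     (\<forall>r\<in>R. \<forall>x1 x2 x3. eval3 scale m r x1 x2 x3 = 0)"

definition lin_subspace :: "('i, 'k::field) tree3 set \<Rightarrow> bool" where
  "lin_subspace U \<longleftrightarrow> (\<lambda>i k s. 0) \<in> U \<and> (\<forall>x\<in>U. \<forall>y\<in>U. (\<lambda>i k s. x i k s + y i k s) \<in> U) \<and>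
     (\<forall>c. \<forall>x\<in>U. (\<lambda>i k s. c * x i k s) \<in> U)"

definition lin_span :: "('i, 'k::field) tree3 set \<Rightarrow> ('i, 'k) tree3 set" where
  "lin_span X = \<Inter>{U. lin_subspace U \<and> X \<subseteq> U}"

text \<open>S3-action on F_V(3): the cyclic relabelling x1->x2->x3->x1 and the transposition x1<->x2\<close>
fun shape_prev :: "shape \<Rightarrow> shape" where
  "shape_prev Sh1 = Sh3" | "shape_prev Sh2 = Sh1" | "shape_prev Sh3 = Sh2"

fun shape_swap :: "shape \<Rightarrow> shape" where
  "shape_swap Sh1 = Sh1" | "shape_swap Sh2 = Sh3" | "shape_swap Sh3 = Sh2"

definition rot_act :: "('i, 'k) tree3 \<Rightarrow> ('i, 'k) tree3" where
  "rot_act r = (\<lambda>i k c. r i k (shape_prev c))"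

definition swap_act :: "('i::finite \<Rightarrow> 'i \<Rightarrow> 'k::field) \<Rightarrow> ('i, 'k) tree3 \<Rightarrow> ('i, 'k) tree3" where
  "swap_act sig r = (\<lambda>i k' c. \<Sum>k\<in>UNIV. sig k' k * r i k (shape_swap c))"

definition s2_module :: "('i::finite \<Rightarrow> 'i \<Rightarrow> 'k::field) \<Rightarrow> bool" where
  "s2_module sig \<longleftrightarrow> (\<forall>i i''. (\<Sum>i'\<in>UNIV. sig i'' i' * sig i' i) = (if i'' = i then 1 else 0))"

definition bin_quad_operad :: "('i::finite \<Rightarrow> 'i \<Rightarrow> 'k::field) \<Rightarrow> ('i, 'k) tree3 set \<Rightarrow> bool" where
  "bin_quad_operad sig R \<longleftrightarrow> s2_module sig \<and> lin_subspace R \<and>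
     (\<forall>r\<in>R. rot_act r \<in> R \<and> swap_act sig r \<in> R)"

text \<open>Koszul dual: V^dual = V^* (x) sgn in the dual basis, and R^perp for the pairing
 <e^v_i(e^v_k(..)) , e_i'(e_k'(..))> = delta delta on trees of the same shape\<close>
definition dual_gen :: "('i \<Rightarrow> 'i \<Rightarrow> 'k::field) \<Rightarrow> ('i \<Rightarrow> 'i \<Rightarrow> 'k)" where
  "dual_gen sig = (\<lambda>i' i. - sig i i')"

definition orth :: "('i::finite, 'k::field) tree3 set \<Rightarrow> ('i, 'k) tree3 set" where
  "orth R = {r'. \<forall>r\<in>R. (\<Sum>i\<in>UNIV. \<Sum>k\<in>UNIV. \<Sum>c\<in>shapes. r' i k c * r i k c) = 0}"

text \<open>Manin black product: generators k_- (x) V (x) W with basis 1_- (x) e_i (x) f_j, relations the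
 image of k_- (x) R (x) S under the projection to F(3)\<close>
definition black_gen :: "('i \<Rightarrow> 'i \<Rightarrow> 'k::field) \<Rightarrow> ('j \<Rightarrow> 'j \<Rightarrow> 'k) \<Rightarrow> ('i \<times> 'j \<Rightarrow> 'i \<times> 'j \<Rightarrow> 'k)" where
  "black_gen sigV sigW = (\<lambda>(i', j') (i, j). - (sigV i' i * sigW j' j))"

definition black_rel :: "('i, 'k::field) tree3 set \<Rightarrow> ('j, 'k) tree3 set \<Rightarrow> ('i \<times> 'j, 'k) tree3 set" where
  "black_rel R S = lin_span
     {(\<lambda>(i, j) (k, l) c. r i k c * s j l c) | r s. r \<in> R \<and> s \<in> S}"

text \<open>Vector spaces with a basis indexed by a type 'y are 'y =>_0 'k.  For B = 'y =>_0 'k and A any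
 vector space, B (x) A is canonically 'y =>_0 A  (p (x) a  |->  (y |-> p(y) a)).\<close>
definition fs_scale :: "'k::field \<Rightarrow> ('y \<Rightarrow>\<^sub>0 'k) \<Rightarrow> ('y \<Rightarrow>\<^sub>0 'k)" where
  "fs_scale c p = Poly_Mapping.map (\<lambda>v. c * v) p"

definition tensor_scale :: "('k \<Rightarrow> 'a::ab_group_add \<Rightarrow> 'a) \<Rightarrow> 'k \<Rightarrow> ('y \<Rightarrow>\<^sub>0 'a) \<Rightarrow> ('y \<Rightarrow>\<^sub>0 'a)" where
  "tensor_scale scale c T = Poly_Mapping.map (scale c) T"

definition tens :: "('k::zero \<Rightarrow> 'a::ab_group_add \<Rightarrow> 'a) \<Rightarrow> ('y \<Rightarrow>\<^sub>0 'k) \<Rightarrow> 'a \<Rightarrow> ('y \<Rightarrow>\<^sub>0 'a)" where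
  "tens scale p a = Poly_Mapping.map (\<lambda>c. scale c a) p"

definition tensor_ops :: "('k::field \<Rightarrow> 'a::ab_group_add \<Rightarrow> 'a)
    \<Rightarrow> ('i::finite \<Rightarrow> ('y \<Rightarrow>\<^sub>0 'k) \<Rightarrow> ('y \<Rightarrow>\<^sub>0 'k) \<Rightarrow> ('y \<Rightarrow>\<^sub>0 'k))
    \<Rightarrow> ('i \<times> 'j \<Rightarrow> 'a \<Rightarrow> 'a \<Rightarrow> 'a) \<Rightarrow> 'j \<Rightarrow> ('y \<Rightarrow>\<^sub>0 'a) \<Rightarrow> ('y \<Rightarrow>\<^sub>0 'a) \<Rightarrow> ('y \<Rightarrow>\<^sub>0 'a)" where
  "tensor_ops scale nu mu j T T' =
     (\<Sum>y1\<in>Poly_Mapping.keys T. \<Sum>y2\<in>Poly_Mapping.keys T'. \<Sum>i\<in>UNIV.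
        tens scale (nu i (Poly_Mapping.single y1 1) (Poly_Mapping.single y2 1))
                   (mu (i, j) (Poly_Mapping.lookup T y1) (Poly_Mapping.lookup T' y2)))"

end

theory Submission
  imports Defs "HOL-Library.Function_Algebras" "HOL-Library.Countable"
begin

lemma bil_zero1: "bilinear_op scale f \<Longrightarrow> f 0 y = 0"
proof -
  assume "bilinear_op scale f"
  then have "f (0 + 0) y = f 0 y + f 0 y" unfolding bilinear_op_def by blast
  then show ?thesis by simp
qed

lemma bil_zero2: "bilinear_op scale f \<Longrightarrow> f x 0 = 0"
proof -
  assume "bilinear_op scale f"
  then have "f x (0 + 0) = f x 0 + f x 0" unfolding bilinear_op_def by blast
  then show ?thesis by simp
qed

lemma bil_add1: "bilinear_op scale f \<Longrightarrow> f (x + x') y = f x y + f x' y"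
  unfolding bilinear_op_def by blast
lemma bil_add2: "bilinear_op scale f \<Longrightarrow> f x (y + y') = f x y + f x y'"
  unfolding bilinear_op_def by blast
lemma bil_scale1: "bilinear_op scale f \<Longrightarrow> f (scale c x) y = scale c (f x y)"
  unfolding bilinear_op_def by blast
lemma bil_scale2: "bilinear_op scale f \<Longrightarrow> f x (scale c y) = scale c (f x y)"
  unfolding bilinear_op_def by blast

lemma bil_sum1: "bilinear_op scale f \<Longrightarrow> f (\<Sum>x\<in>A. g x) y = (\<Sum>x\<in>A. f (g x) y)"
  by (induction A rule: infinite_finite_induct) (auto simp: bil_zero1 bil_add1)
lemma bil_sum2: "bilinear_op scale f \<Longrightarrow> f y (\<Sum>x\<in>A. g x) = (\<Sum>x\<in>A. f y (g x))"
  by (induction A rule: infinite_finite_induct) (auto simp: bil_zero2 bil_add2)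


lemma sum_fun_app: "(sum f A) x = sum (\<lambda>a. f a x) A"
  by (induction A rule: infinite_finite_induct) auto

definition tsc :: "'k::field \<Rightarrow> ('i, 'k) tree3 \<Rightarrow> ('i, 'k) tree3" where
  "tsc c f = (\<lambda>i k s. c * f i k s)"

lemma tsc_vs: "vector_space (tsc :: 'k::field \<Rightarrow> ('i, 'k) tree3 \<Rightarrow> _)"
  by unfold_locales (auto simp: tsc_def fun_eq_iff algebra_simps)

lemma k_vs: "vector_space ((*) :: 'k::field \<Rightarrow> 'k \<Rightarrow> 'k)"
  by unfold_locales (auto simp: algebra_simps)

lemma finite_shapes_aux: "finite shapes" by (simp add: shapes_def)

lemma double_orth:
  fixes R :: "('i::finite, 'k::field) tree3 set"
  assumes "lin_subspace R"
  shows "orth (orth R) \<subseteq> R"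
proof
  fix v assume v: "v \<in> orth (orth R)"
  show "v \<in> R"
  proof (rule ccontr)
    assume nv: "v \<notin> R"
    interpret TV: vector_space "tsc :: 'k \<Rightarrow> ('i, 'k) tree3 \<Rightarrow> _" by (rule tsc_vs)
    interpret KV: vector_space "(*) :: 'k \<Rightarrow> 'k \<Rightarrow> 'k" by (rule k_vs)
    interpret P: vector_space_pair "tsc :: 'k \<Rightarrow> ('i, 'k) tree3 \<Rightarrow> _" "(*) :: 'k \<Rightarrow> 'k \<Rightarrow> 'k" ..
    have z: "(0 :: ('i, 'k) tree3) = (\<lambda>i k s. 0)" by (simp add: fun_eq_iff)
    have pl: "x + y = (\<lambda>i k s. x i k s + y i k s)" for x y :: "('i, 'k) tree3" by (simp add: fun_eq_iff)
    have sub: "TV.subspace R" using assms unfolding lin_subspace_def TV.subspace_def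
      by (simp add: tsc_def z pl)
    obtain B where B: "B \<subseteq> R" "TV.independent B" "R \<subseteq> TV.span B" by (rule TV.basis_exists)
    have spanB: "TV.span B = R" using TV.span_subspace[OF B(1) B(3) sub] .
    have ind: "TV.independent (insert v B)" using TV.independent_insertI nv spanB B(2) by auto
    obtain g where g: "Vector_Spaces.linear tsc (*) g" and gv: "\<forall>x\<in>insert v B. g x = (if x = v then 1 else 0)"
      using P.linear_independent_extend[OF ind, of "\<lambda>x. if x = v then 1 else 0"] by blast
    have gB: "g x = 0" if "x \<in> B" for x using gv that B(1) nv by auto
    have g0: "g r = 0" if "r \<in> R" for r
      using P.linear_eq_0_on_span[OF g, of B r] gB that spanB by auto
    define d where "d i k c = (\<lambda>(i'::'i) (k'::'i) (c'::shape). if i' = i \<and> k' = k \<and> c' = c then (1::'k) else 0)" for i k c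
    define w where "w i k c = g (d i k c)" for i k c
    have gexp: "g x = (\<Sum>i\<in>UNIV. \<Sum>k\<in>UNIV. \<Sum>c\<in>shapes. x i k c * w i k c)" for x
    proof -
      have sh: "shapes = UNIV" unfolding shapes_def using shape.exhaust by blast
      have "x = (\<Sum>i\<in>UNIV. \<Sum>k\<in>UNIV. \<Sum>c\<in>shapes. tsc (x i k c) (d i k c))"
      proof (rule ext, rule ext, rule ext)
        fix i' k' c'
        have "(\<Sum>i\<in>UNIV. \<Sum>k\<in>UNIV. \<Sum>c\<in>shapes. tsc (x i k c) (d i k c)) i' k' c'
           = (\<Sum>i\<in>UNIV. \<Sum>k\<in>UNIV. \<Sum>c\<in>shapes. x i k c * d i k c i' k' c')"
          by (simp add: sum_fun_app tsc_def)
        also have "\<dots> = (\<Sum>i\<in>UNIV. \<Sum>k\<in>UNIV. if i' = i \<and> k' = k then x i k c' else 0)"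
        proof (intro sum.cong refl)
          fix i k
          have fs: "finite (UNIV :: shape set)" using sh finite_shapes_aux by simp
          show "(\<Sum>c\<in>shapes. x i k c * d i k c i' k' c') = (if i' = i \<and> k' = k then x i k c' else 0)"
            by (cases "i' = i \<and> k' = k") (auto simp: d_def sh fs if_distrib[of "\<lambda>t. _ * t"] cong: if_cong)
        qed
        also have "\<dots> = (\<Sum>i\<in>UNIV. if i' = i then x i k' c' else 0)"
        proof (intro sum.cong refl)
          fix i
          show "(\<Sum>k\<in>UNIV. if i' = i \<and> k' = k then x i k c' else 0) = (if i' = i then x i k' c' else 0)"
            by (cases "i' = i") auto
        qed
        also have "\<dots> = x i' k' c'" by simp
        finally show "x i' k' c' = (\<Sum>i\<in>UNIV. \<Sum>k\<in>UNIV. \<Sum>c\<in>shapes. tsc (x i k c) (d i k c)) i' k' c'" ..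
      qed
      then have "g x = g (\<Sum>i\<in>UNIV. \<Sum>k\<in>UNIV. \<Sum>c\<in>shapes. tsc (x i k c) (d i k c))" by simp
      also have "\<dots> = (\<Sum>i\<in>UNIV. \<Sum>k\<in>UNIV. \<Sum>c\<in>shapes. x i k c * w i k c)"
        by (simp add: P.linear_sum[OF g] P.linear_scale[OF g] w_def)
      finally show ?thesis .
    qed
    have "w \<in> orth R" unfolding orth_def
      using g0 gexp by (simp add: mult.commute)
    then have "(\<Sum>i\<in>UNIV. \<Sum>k\<in>UNIV. \<Sum>c\<in>shapes. v i k c * w i k c) = 0"
      using v unfolding orth_def by auto
    moreover have "g v = 1" using gv by simp
    ultimately show False using gexp[of v] by simp
  qed
qed


lemma sum_pull2: "(\<Sum>a\<in>A. \<Sum>b\<in>B. \<Sum>x\<in>X. f a b x) = (\<Sum>x\<in>X. \<Sum>a\<in>A. \<Sum>b\<in>B. f a b x)"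
proof -
  have "(\<Sum>a\<in>A. \<Sum>b\<in>B. \<Sum>x\<in>X. f a b x) = (\<Sum>a\<in>A. \<Sum>x\<in>X. \<Sum>b\<in>B. f a b x)"
    by (intro sum.cong refl) (rule sum.swap)
  also have "\<dots> = (\<Sum>x\<in>X. \<Sum>a\<in>A. \<Sum>b\<in>B. f a b x)" by (rule sum.swap)
  finally show ?thesis .
qed

lemma sum_pull3: "(\<Sum>a\<in>A. \<Sum>b\<in>B. \<Sum>c\<in>C. \<Sum>x\<in>X. f a b c x) = (\<Sum>x\<in>X. \<Sum>a\<in>A. \<Sum>b\<in>B. \<Sum>c\<in>C. f a b c x)"
proof -
  have "(\<Sum>a\<in>A. \<Sum>b\<in>B. \<Sum>c\<in>C. \<Sum>x\<in>X. f a b c x) = (\<Sum>a\<in>A. \<Sum>x\<in>X. \<Sum>b\<in>B. \<Sum>c\<in>C. f a b c x)"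
    by (intro sum.cong refl) (rule sum_pull2)
  also have "\<dots> = (\<Sum>x\<in>X. \<Sum>a\<in>A. \<Sum>b\<in>B. \<Sum>c\<in>C. f a b c x)" by (rule sum.swap)
  finally show ?thesis .
qed

lemma sum_block33: "(\<Sum>a\<in>A. \<Sum>b\<in>B. \<Sum>c\<in>C. \<Sum>x\<in>X. \<Sum>y\<in>Y. \<Sum>z\<in>Z. f a b c x y z)
   = (\<Sum>x\<in>X. \<Sum>y\<in>Y. \<Sum>z\<in>Z. \<Sum>a\<in>A. \<Sum>b\<in>B. \<Sum>c\<in>C. f a b c x y z)"
proof -
  have "(\<Sum>a\<in>A. \<Sum>b\<in>B. \<Sum>c\<in>C. \<Sum>x\<in>X. \<Sum>y\<in>Y. \<Sum>z\<in>Z. f a b c x y z)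
      = (\<Sum>a\<in>A. \<Sum>b\<in>B. \<Sum>x\<in>X. \<Sum>y\<in>Y. \<Sum>z\<in>Z. \<Sum>c\<in>C. f a b c x y z)"
    by (intro sum.cong refl) (rule sum_pull3[symmetric])
  also have "\<dots> = (\<Sum>a\<in>A. \<Sum>x\<in>X. \<Sum>y\<in>Y. \<Sum>z\<in>Z. \<Sum>b\<in>B. \<Sum>c\<in>C. f a b c x y z)"
    by (intro sum.cong refl) (rule sum_pull3[symmetric])
  also have "\<dots> = (\<Sum>x\<in>X. \<Sum>y\<in>Y. \<Sum>z\<in>Z. \<Sum>a\<in>A. \<Sum>b\<in>B. \<Sum>c\<in>C. f a b c x y z)"
    by (rule sum_pull3[symmetric])
  finally show ?thesis .
qed

lemma sum_rot3: "(\<Sum>a\<in>A. \<Sum>b\<in>B. \<Sum>c\<in>C. f a b c) = (\<Sum>b\<in>B. \<Sum>c\<in>C. \<Sum>a\<in>A. f a b c)"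
  by (rule sum_pull2[symmetric])

lemma sum_UNIV_prod: "(\<Sum>p\<in>(UNIV :: ('a \<times> 'b) set). g p) = (\<Sum>i\<in>UNIV. \<Sum>j\<in>UNIV. g (i, j))"
  by (subst UNIV_Times_UNIV[symmetric]) (simp add: sum.cartesian_product)



lemma sum_shapes: "(\<Sum>c\<in>shapes. f c) = f Sh1 + f Sh2 + f Sh3"
  by (simp add: shapes_def add_ac)

lemma eval3_rot:
  "eval3 scale m (rot_act r) x1 x2 x3 = eval3 scale m r x2 x3 x1"
  unfolding eval3_def rot_act_def by (simp add: sum_shapes add_ac)

lemma orth_rot:
  assumes "u \<in> orth R" "\<forall>r\<in>R. rot_act r \<in> R"
  shows "rot_act u \<in> orth R"
  unfolding orth_def
proof (intro CollectI ballI)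
  fix r assume r: "r \<in> R"
  have "rot_act (rot_act r) \<in> R" using assms(2) r by blast
  then have "(\<Sum>i\<in>UNIV. \<Sum>k\<in>UNIV. \<Sum>c\<in>shapes. u i k c * rot_act (rot_act r) i k c) = 0"
    using assms(1) unfolding orth_def by blast
  then show "(\<Sum>i\<in>UNIV. \<Sum>k\<in>UNIV. \<Sum>c\<in>shapes. rot_act u i k c * r i k c) = 0"
    unfolding rot_act_def by (simp add: sum_shapes add_ac)
qed

lemma orth_swap:
  fixes sig :: "'i::finite \<Rightarrow> 'i \<Rightarrow> 'k::field"
  assumes "u \<in> orth R" "\<forall>r\<in>R. swap_act sig r \<in> R"
  shows "swap_act (dual_gen sig) u \<in> orth R"
  unfolding orth_def
proof (intro CollectI ballI)
  fix r assume r: "r \<in> R"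
  have "swap_act sig r \<in> R" using assms(2) r by blast
  then have 0: "(\<Sum>i\<in>UNIV. \<Sum>k\<in>UNIV. \<Sum>c\<in>shapes. u i k c * swap_act sig r i k c) = 0"
    using assms(1) unfolding orth_def by blast
  have "(\<Sum>i\<in>UNIV. \<Sum>k\<in>UNIV. \<Sum>c\<in>shapes. swap_act (dual_gen sig) u i k c * r i k c)
      = (\<Sum>i\<in>UNIV. \<Sum>k\<in>UNIV. \<Sum>c\<in>shapes. \<Sum>k'\<in>UNIV. - (sig k' k * u i k' (shape_swap c) * r i k c))"
    unfolding swap_act_def dual_gen_def by (simp add: sum_distrib_right)
  also have "\<dots> = (\<Sum>i\<in>UNIV. \<Sum>k\<in>UNIV. \<Sum>c\<in>shapes. \<Sum>k'\<in>UNIV. - (sig k' k * u i k' c * r i k (shape_swap c)))"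
    by (simp add: sum_shapes add_ac)
  also have "\<dots> = (\<Sum>i\<in>UNIV. \<Sum>k'\<in>UNIV. \<Sum>c\<in>shapes. \<Sum>k\<in>UNIV. - (sig k' k * u i k' c * r i k (shape_swap c)))"
    apply (rule sum.cong[OF refl])
    apply (rule trans[OF sum_pull2])
    apply (rule sum.cong[OF refl])
    by (rule sum.swap)
  also have "\<dots> = - (\<Sum>i\<in>UNIV. \<Sum>k\<in>UNIV. \<Sum>c\<in>shapes. u i k c * swap_act sig r i k c)"
    unfolding swap_act_def by (simp add: sum_distrib_left sum_negf mult_ac)
  finally show "(\<Sum>i\<in>UNIV. \<Sum>k\<in>UNIV. \<Sum>c\<in>shapes. swap_act (dual_gen sig) u i k c * r i k c) = 0"
    using 0 by simp
qed


lemma shape_swap_swap[simp]: "shape_swap (shape_swap c) = c"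
  by (cases c) auto

lemma sum_shapes_swap: "(\<Sum>c\<in>shapes. f c) = (\<Sum>c\<in>shapes. f (shape_swap c))"
  by (simp add: sum_shapes add_ac)

context
  fixes scale :: "'k::field \<Rightarrow> 'a::ab_group_add \<Rightarrow> 'a"
  assumes VS: "vector_space scale"
begin

interpretation V: vector_space scale by (rule VS)

lemma eval3_swap:
  fixes m :: "'i::finite \<Rightarrow> 'a \<Rightarrow> 'a \<Rightarrow> 'a" and sig :: "'i \<Rightarrow> 'i \<Rightarrow> 'k"
  assumes BL: "\<forall>i. bilinear_op scale (m i)"
    and EQ: "\<forall>i x y. (\<Sum>i'\<in>UNIV. scale (sig i' i) (m i' x y)) = m i y x"
  shows "eval3 scale m (swap_act sig r) x1 x2 x3 = eval3 scale m r x2 x1 x3"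
proof -
  have e: "m k y x = (\<Sum>k'\<in>UNIV. scale (sig k' k) (m k' x y))" for k x y using EQ by simp
  have ls: "m i (\<Sum>k'\<in>UNIV. scale (sig k' k) (g k')) z = (\<Sum>k'\<in>UNIV. scale (sig k' k) (m i (g k') z))" for i k g z
    using BL by (simp only: bil_sum1[of scale "m i"] bil_scale1[of scale "m i"])
  have ts: "tree_eval m i k c x2 x1 x3 = (\<Sum>k'\<in>UNIV. scale (sig k' k) (tree_eval m i k' (shape_swap c) x1 x2 x3))" for i k c
  proof (cases c)
    case Sh1
    show ?thesis unfolding Sh1 by (simp only: tree_eval.simps shape_swap.simps e[of k x2 x1] ls)
  next
    case Sh2
    show ?thesis unfolding Sh2 by (simp only: tree_eval.simps shape_swap.simps e[of k x1 x3] ls)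
  next
    case Sh3
    show ?thesis unfolding Sh3 by (simp only: tree_eval.simps shape_swap.simps e[of k x3 x2] ls)
  qed
  have "eval3 scale m (swap_act sig r) x1 x2 x3 =
     (\<Sum>i\<in>UNIV. \<Sum>k'\<in>UNIV. \<Sum>c\<in>shapes. \<Sum>k\<in>UNIV. scale (sig k' k * r i k (shape_swap c)) (tree_eval m i k' c x1 x2 x3))"
    unfolding eval3_def swap_act_def by (simp only: V.scale_sum_left)
  also have "\<dots> = (\<Sum>i\<in>UNIV. \<Sum>k'\<in>UNIV. \<Sum>c\<in>shapes. \<Sum>k\<in>UNIV. scale (sig k' k * r i k c) (tree_eval m i k' (shape_swap c) x1 x2 x3))"
    apply (rule sum.cong[OF refl], rule sum.cong[OF refl])
    apply (subst sum_shapes_swap)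
    by simp
  also have "\<dots> = (\<Sum>i\<in>UNIV. \<Sum>k\<in>UNIV. \<Sum>c\<in>shapes. \<Sum>k'\<in>UNIV. scale (sig k' k * r i k c) (tree_eval m i k' (shape_swap c) x1 x2 x3))"
    apply (rule sum.cong[OF refl])
    apply (rule trans[OF sum_pull2])
    apply (rule sum.cong[OF refl])
    by (rule sum.swap)
  also have "\<dots> = eval3 scale m r x2 x1 x3"
    unfolding eval3_def ts by (simp only: V.scale_sum_right V.scale_scale mult.commute)
  finally show ?thesis .
qed

end



abbreviation lk :: "('y \<Rightarrow>\<^sub>0 'b::zero) \<Rightarrow> 'y \<Rightarrow> 'b" where "lk \<equiv> Poly_Mapping.lookup"
abbreviation pk :: "('y \<Rightarrow>\<^sub>0 'b::zero) \<Rightarrow> 'y set" where "pk \<equiv> Poly_Mapping.keys"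

abbreviation e1 :: "'y \<Rightarrow> ('y \<Rightarrow>\<^sub>0 'k::field)" where "e1 y \<equiv> Poly_Mapping.single y 1"

lemma lookup_pmap: "lk (Poly_Mapping.map f p) k = (if lk p k = 0 then 0 else f (lk p k))"
  by transfer (simp add: when_def)

lemma lookup_fs_scale[simp]: "lk (fs_scale c p) k = c * lk p k"
  by (simp add: fs_scale_def lookup_pmap)

lemma shapes_UNIV: "shapes = UNIV"
  unfolding shapes_def using shape.exhaust by blast

lemma finite_shapes[simp]: "finite shapes" by (simp add: shapes_def)

context
  fixes scale :: "'k::field \<Rightarrow> 'a::ab_group_add \<Rightarrow> 'a"
  assumes VS: "vector_space scale"
begin

interpretation V: vector_space scale by (rule VS)

lemma lookup_tensor_scale[simp]: "lk (tensor_scale scale c T) k = scale c (lk T k)"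
  by (simp add: tensor_scale_def lookup_pmap)

lemma lookup_tens[simp]: "lk (tens scale (p::'y \<Rightarrow>\<^sub>0 'k) (a::'a)) k = scale (lk p k) a"
  by (simp add: tens_def lookup_pmap)

end


lemma keys_fs_scale: "pk (fs_scale c p) \<subseteq> pk p"
  by (auto simp: in_keys_iff)

lemma pm_expand:
  fixes p :: "'y \<Rightarrow>\<^sub>0 'k::field"
  assumes "finite K" "pk p \<subseteq> K"
  shows "p = (\<Sum>u\<in>K. fs_scale (lk p u) (e1 u))"
proof (rule poly_mapping_eqI)
  fix k
  have "(\<Sum>u\<in>K. lk p u * lk (e1 u) k) = (\<Sum>u\<in>K. if u = k then lk p k else 0)"
    by (rule sum.cong) (auto simp: lookup_single)
  also have "\<dots> = lk p k" using assms by (auto simp: in_keys_iff)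
  finally show "lk p k = lk (\<Sum>u\<in>K. fs_scale (lk p u) (e1 u)) k"
    by (simp add: lookup_sum)
qed

lemma fs_vs: "vector_space (fs_scale :: 'k::field \<Rightarrow> ('y \<Rightarrow>\<^sub>0 'k) \<Rightarrow> _)"
proof
  fix a b :: 'k and x y :: "'y \<Rightarrow>\<^sub>0 'k"
  show "fs_scale a (x + y) = fs_scale a x + fs_scale a y"
    by (rule poly_mapping_eqI) (simp add: lookup_add distrib_left)
  show "fs_scale (a + b) x = fs_scale a x + fs_scale b x"
    by (rule poly_mapping_eqI) (simp add: lookup_add distrib_right)
  show "fs_scale a (fs_scale b x) = fs_scale (a * b) x"
    by (rule poly_mapping_eqI) (simp add: mult.assoc)
  show "fs_scale 1 x = x"
    by (rule poly_mapping_eqI) simp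
qed

lemma fs_expand1:
  fixes f :: "('y \<Rightarrow>\<^sub>0 'k::field) \<Rightarrow> _ \<Rightarrow> ('y \<Rightarrow>\<^sub>0 'k)"
  assumes "bilinear_op fs_scale f" "finite K" "pk p \<subseteq> K"
  shows "f p q = (\<Sum>u\<in>K. fs_scale (lk p u) (f (e1 u) q))"
  apply (subst (1) pm_expand[OF assms(2,3)])
  by (simp only: bil_sum1[OF assms(1)] bil_scale1[OF assms(1)])

lemma fs_expand2:
  fixes f :: "_ \<Rightarrow> ('y \<Rightarrow>\<^sub>0 'k::field) \<Rightarrow> ('y \<Rightarrow>\<^sub>0 'k)"
  assumes "bilinear_op fs_scale f" "finite K" "pk p \<subseteq> K"
  shows "f q p = (\<Sum>u\<in>K. fs_scale (lk p u) (f q (e1 u)))"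
  apply (subst (1) pm_expand[OF assms(2,3)])
  by (simp only: bil_sum2[OF assms(1)] bil_scale2[OF assms(1)])

context
  fixes scale :: "'k::field \<Rightarrow> 'a::ab_group_add \<Rightarrow> 'a"
    and mu :: "'i::finite \<times> 'j::finite \<Rightarrow> 'a \<Rightarrow> 'a \<Rightarrow> 'a"
  assumes VS: "vector_space scale"
    and MU: "\<forall>ij. bilinear_op scale (mu ij)"
begin

interpretation V: vector_space scale by (rule VS)

lemma keys_tensor_scale: "pk (tensor_scale scale c T) \<subseteq> pk T"
  by (auto simp: in_keys_iff lookup_tensor_scale[OF VS])

lemma tops_lk:
  fixes nu :: "'i \<Rightarrow> ('y \<Rightarrow>\<^sub>0 'k) \<Rightarrow> ('y \<Rightarrow>\<^sub>0 'k) \<Rightarrow> ('y \<Rightarrow>\<^sub>0 'k)"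
  assumes "finite K1" "pk T \<subseteq> K1" "finite K2" "pk T' \<subseteq> K2"
  shows "lk (tensor_ops scale nu mu j T T') h = (\<Sum>y1\<in>K1. \<Sum>y2\<in>K2. \<Sum>i\<in>UNIV.
           scale (lk (nu i (e1 y1) (e1 y2)) h) (mu (i,j) (lk T y1) (lk T' y2)))"
proof -
  have z1: "mu ij 0 b = 0" "mu ij b 0 = 0" for ij b
    using bil_zero1 bil_zero2 MU by blast+
  have "lk (tensor_ops scale nu mu j T T') h = (\<Sum>y1\<in>pk T. \<Sum>y2\<in>pk T'. \<Sum>i\<in>UNIV.
           scale (lk (nu i (e1 y1) (e1 y2)) h) (mu (i,j) (lk T y1) (lk T' y2)))"
    by (simp add: tensor_ops_def lookup_sum lookup_tens[OF VS])
  also have "\<dots> = (\<Sum>y1\<in>K1. \<Sum>y2\<in>pk T'. \<Sum>i\<in>UNIV.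
           scale (lk (nu i (e1 y1) (e1 y2)) h) (mu (i,j) (lk T y1) (lk T' y2)))"
    by (rule sum.mono_neutral_left) (use assms in \<open>auto simp: in_keys_iff z1\<close>)
  also have "\<dots> = (\<Sum>y1\<in>K1. \<Sum>y2\<in>K2. \<Sum>i\<in>UNIV.
           scale (lk (nu i (e1 y1) (e1 y2)) h) (mu (i,j) (lk T y1) (lk T' y2)))"
    by (rule sum.cong[OF refl], rule sum.mono_neutral_left) (use assms in \<open>auto simp: in_keys_iff z1\<close>)
  finally show ?thesis .
qed

lemma tops_bilinear:
  fixes nu :: "'i \<Rightarrow> ('y \<Rightarrow>\<^sub>0 'k) \<Rightarrow> ('y \<Rightarrow>\<^sub>0 'k) \<Rightarrow> ('y \<Rightarrow>\<^sub>0 'k)"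
  shows "bilinear_op (tensor_scale scale) (tensor_ops scale nu mu j)"
  unfolding bilinear_op_def
proof (intro conjI allI)
  have a1: "mu ij (x + x') y = mu ij x y + mu ij x' y" "mu ij x (y + y') = mu ij x y + mu ij x y'"
    "mu ij (scale c x) y = scale c (mu ij x y)" "mu ij x (scale c y) = scale c (mu ij x y)" for ij x x' y y' c
    using MU unfolding bilinear_op_def by blast+
  fix x x' y :: "'y \<Rightarrow>\<^sub>0 'a" and c
  show "tensor_ops scale nu mu j (x + x') y = tensor_ops scale nu mu j x y + tensor_ops scale nu mu j x' y"
  proof (rule poly_mapping_eqI)
    fix h
    let ?K = "pk x \<union> pk x'"
    have k: "pk (x + x') \<subseteq> ?K" by (rule keys_add)
    show "lk (tensor_ops scale nu mu j (x + x') y) h = lk (tensor_ops scale nu mu j x y + tensor_ops scale nu mu j x' y) h"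
      apply (simp only: lookup_add)
      apply (subst (1 2 3) tops_lk[of ?K _ "pk y", OF _ _ finite_keys order_refl])
      using k by (auto simp: lookup_add a1 V.scale_right_distrib sum.distrib)
  qed
  show "tensor_ops scale nu mu j (tensor_scale scale c x) y = tensor_scale scale c (tensor_ops scale nu mu j x y)"
  proof (rule poly_mapping_eqI)
    fix h
    show "lk (tensor_ops scale nu mu j (tensor_scale scale c x) y) h = lk (tensor_scale scale c (tensor_ops scale nu mu j x y)) h"
      apply (simp only: lookup_tensor_scale[OF VS])
      apply (subst (1 2) tops_lk[of "pk x" _ "pk y", OF finite_keys _ finite_keys])
      by (auto simp: a1 V.scale_sum_right mult.commute lookup_tensor_scale[OF VS] keys_tensor_scale)
  qed
next
  have a1: "mu ij (x + x') y = mu ij x y + mu ij x' y" "mu ij x (y + y') = mu ij x y + mu ij x y'"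
    "mu ij (scale c x) y = scale c (mu ij x y)" "mu ij x (scale c y) = scale c (mu ij x y)" for ij x x' y y' c
    using MU unfolding bilinear_op_def by blast+
  fix x y y' :: "'y \<Rightarrow>\<^sub>0 'a" and c
  show "tensor_ops scale nu mu j x (y + y') = tensor_ops scale nu mu j x y + tensor_ops scale nu mu j x y'"
  proof (rule poly_mapping_eqI)
    fix h
    let ?K = "pk y \<union> pk y'"
    have k: "pk (y + y') \<subseteq> ?K" by (rule keys_add)
    show "lk (tensor_ops scale nu mu j x (y + y')) h = lk (tensor_ops scale nu mu j x y + tensor_ops scale nu mu j x y') h"
      apply (simp only: lookup_add)
      apply (subst (1 2 3) tops_lk[of "pk x" _ ?K, OF finite_keys order_refl])
      using k by (auto simp: lookup_add a1 V.scale_right_distrib sum.distrib)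
  qed
  show "tensor_ops scale nu mu j x (tensor_scale scale c y) = tensor_scale scale c (tensor_ops scale nu mu j x y)"
  proof (rule poly_mapping_eqI)
    fix h
    show "lk (tensor_ops scale nu mu j x (tensor_scale scale c y)) h = lk (tensor_scale scale c (tensor_ops scale nu mu j x y)) h"
      apply (simp only: lookup_tensor_scale[OF VS])
      apply (subst (1 2) tops_lk[of "pk x" _ "pk y", OF finite_keys _ finite_keys])
      by (auto simp: a1 V.scale_sum_right mult.commute lookup_tensor_scale[OF VS] keys_tensor_scale)
  qed
qed


lemma tops_pure1:
  fixes nu :: "'i \<Rightarrow> ('y \<Rightarrow>\<^sub>0 'k) \<Rightarrow> ('y \<Rightarrow>\<^sub>0 'k) \<Rightarrow> ('y \<Rightarrow>\<^sub>0 'k)"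
  assumes NU: "\<forall>i. bilinear_op fs_scale (nu i)"
  shows "lk (tensor_ops scale nu mu j (tens scale p a) T) h = (\<Sum>y\<in>pk T. \<Sum>i\<in>UNIV.
           scale (lk (nu i p (e1 y)) h) (mu (i,j) a (lk T y)))"
proof -
  have a1: "mu ij (scale c x) y = scale c (mu ij x y)" for ij x y c
    using MU unfolding bilinear_op_def by blast+
  have kt: "pk (tens scale p a) \<subseteq> pk p" by (auto simp: in_keys_iff lookup_tens[OF VS])
  have "lk (tensor_ops scale nu mu j (tens scale p a) T) h = (\<Sum>u\<in>pk p. \<Sum>y\<in>pk T. \<Sum>i\<in>UNIV.
           scale (lk (nu i (e1 u) (e1 y)) h) (mu (i,j) (lk (tens scale p a) u) (lk T y)))"
    by (rule tops_lk[OF finite_keys kt finite_keys order_refl])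
  also have "\<dots> = (\<Sum>u\<in>pk p. \<Sum>y\<in>pk T. \<Sum>i\<in>UNIV.
           scale (lk p u * lk (nu i (e1 u) (e1 y)) h) (mu (i,j) a (lk T y)))"
    by (simp add: lookup_tens[OF VS] a1 mult.commute)
  also have "\<dots> = (\<Sum>y\<in>pk T. \<Sum>i\<in>UNIV. \<Sum>u\<in>pk p.
           scale (lk p u * lk (nu i (e1 u) (e1 y)) h) (mu (i,j) a (lk T y)))"
    by (subst sum.swap, rule sum.cong[OF refl], rule sum.swap)
  also have "\<dots> = (\<Sum>y\<in>pk T. \<Sum>i\<in>UNIV.
           scale (lk (nu i p (e1 y)) h) (mu (i,j) a (lk T y)))"
    apply (rule sum.cong[OF refl], rule sum.cong[OF refl])
    apply (subst fs_expand1[of "nu _" "pk p" p, OF _ finite_keys order_refl])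
    using NU by (auto simp: lookup_sum V.scale_sum_left)
  finally show ?thesis .
qed

lemma tops_nested:
  fixes nu :: "'i \<Rightarrow> ('y \<Rightarrow>\<^sub>0 'k) \<Rightarrow> ('y \<Rightarrow>\<^sub>0 'k) \<Rightarrow> ('y \<Rightarrow>\<^sub>0 'k)"
  assumes NU: "\<forall>i. bilinear_op fs_scale (nu i)"
  shows "lk (tensor_ops scale nu mu j (tensor_ops scale nu mu l T1 T2) T3) h =
   (\<Sum>y1\<in>pk T1. \<Sum>y2\<in>pk T2. \<Sum>y3\<in>pk T3. \<Sum>i\<in>UNIV. \<Sum>k\<in>UNIV.
      scale (lk (nu i (nu k (e1 y1) (e1 y2)) (e1 y3)) h) (mu (i,j) (mu (k,l) (lk T1 y1) (lk T2 y2)) (lk T3 y3)))"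
proof -
  have B: "bilinear_op (tensor_scale scale) (tensor_ops scale nu mu j)" by (rule tops_bilinear)
  have "lk (tensor_ops scale nu mu j (tensor_ops scale nu mu l T1 T2) T3) h =
     (\<Sum>y1\<in>pk T1. \<Sum>y2\<in>pk T2. \<Sum>k\<in>UNIV. lk (tensor_ops scale nu mu j
        (tens scale (nu k (e1 y1) (e1 y2)) (mu (k, l) (lk T1 y1) (lk T2 y2))) T3) h)"
    by (simp add: tensor_ops_def[of scale nu mu l] bil_sum1[OF B] lookup_sum)
  also have "\<dots> = (\<Sum>y1\<in>pk T1. \<Sum>y2\<in>pk T2. \<Sum>k\<in>UNIV. \<Sum>y3\<in>pk T3. \<Sum>i\<in>UNIV.
      scale (lk (nu i (nu k (e1 y1) (e1 y2)) (e1 y3)) h) (mu (i,j) (mu (k,l) (lk T1 y1) (lk T2 y2)) (lk T3 y3)))"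
    by (simp add: tops_pure1[OF NU])
  also have "\<dots> = (\<Sum>y1\<in>pk T1. \<Sum>y2\<in>pk T2. \<Sum>y3\<in>pk T3. \<Sum>i\<in>UNIV. \<Sum>k\<in>UNIV.
      scale (lk (nu i (nu k (e1 y1) (e1 y2)) (e1 y3)) h) (mu (i,j) (mu (k,l) (lk T1 y1) (lk T2 y2)) (lk T3 y3)))"
    apply (rule sum.cong[OF refl], rule sum.cong[OF refl])
    apply (rule trans[OF sum.swap])
    apply (rule sum.cong[OF refl])
    by (rule sum.swap)
  finally show ?thesis .
qed


lemma tops_tree:
  fixes nu :: "'i \<Rightarrow> ('y \<Rightarrow>\<^sub>0 'k) \<Rightarrow> ('y \<Rightarrow>\<^sub>0 'k) \<Rightarrow> ('y \<Rightarrow>\<^sub>0 'k)"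
  assumes NU: "\<forall>i. bilinear_op fs_scale (nu i)"
  shows "lk (tree_eval (tensor_ops scale nu mu) j l c T1 T2 T3) h =
   (\<Sum>y1\<in>pk T1. \<Sum>y2\<in>pk T2. \<Sum>y3\<in>pk T3. \<Sum>i\<in>UNIV. \<Sum>k\<in>UNIV.
      scale (lk (tree_eval nu i k c (e1 y1) (e1 y2) (e1 y3)) h)
        (tree_eval mu (i,j) (k,l) c (lk T1 y1) (lk T2 y2) (lk T3 y3)))"
proof (cases c)
  case Sh1
  then show ?thesis by (simp add: tops_nested[OF NU])
next
  case Sh2
  then show ?thesis unfolding Sh2 tree_eval.simps by (subst tops_nested[OF NU]) (rule sum_rot3[symmetric])
next
  case Sh3
  then show ?thesis unfolding Sh3 tree_eval.simps by (subst tops_nested[OF NU]) (rule sum_rot3)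
qed

lemma eval3_black:
  "eval3 scale mu (\<lambda>(i, j) (k, l) c. r i k c * s j l c) a1 a2 a3 =
   (\<Sum>j\<in>UNIV. \<Sum>l\<in>UNIV. \<Sum>c\<in>shapes. scale (s j l c) (\<Sum>i\<in>UNIV. \<Sum>k\<in>UNIV.
      scale (r i k c) (tree_eval mu (i,j) (k,l) c a1 a2 a3)))"
proof -
  have "eval3 scale mu (\<lambda>(i, j) (k, l) c. r i k c * s j l c) a1 a2 a3 =
     (\<Sum>i\<in>UNIV. \<Sum>j\<in>UNIV. \<Sum>k\<in>UNIV. \<Sum>l\<in>UNIV. \<Sum>c\<in>shapes.
        scale (s j l c * r i k c) (tree_eval mu (i,j) (k,l) c a1 a2 a3))"
    unfolding eval3_def by (simp add: sum_UNIV_prod mult.commute)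
  also have "\<dots> = (\<Sum>i\<in>UNIV. \<Sum>j\<in>UNIV. \<Sum>l\<in>UNIV. \<Sum>c\<in>shapes. \<Sum>k\<in>UNIV.
        scale (s j l c * r i k c) (tree_eval mu (i,j) (k,l) c a1 a2 a3))"
    by (intro sum.cong refl) (rule sum_pull2[symmetric])
  also have "\<dots> = (\<Sum>j\<in>UNIV. \<Sum>l\<in>UNIV. \<Sum>c\<in>shapes. \<Sum>i\<in>UNIV. \<Sum>k\<in>UNIV.
        scale (s j l c * r i k c) (tree_eval mu (i,j) (k,l) c a1 a2 a3))"
    by (rule sum_pull3[symmetric])
  finally show ?thesis by (simp add: V.scale_sum_right mult.commute)
qed


lemma key_equiv:
  fixes sigV :: "'i \<Rightarrow> 'i \<Rightarrow> 'k" and sigW :: "'j \<Rightarrow> 'j \<Rightarrow> 'k" and M :: "'i \<times> 'j \<Rightarrow> 'a"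
  assumes s2: "s2_module sigV"
  shows "(\<Sum>j'\<in>UNIV. scale (sigW j' j) (\<Sum>i\<in>UNIV. scale (al i) (M (i, j'))))
       = (\<Sum>i\<in>UNIV. scale (\<Sum>i'\<in>UNIV. dual_gen sigV i' i * al i')
            (\<Sum>p\<in>UNIV. scale (black_gen sigV sigW p (i, j)) (M p)))"
proof -
  have d: "(\<Sum>i\<in>UNIV. sigV i'' i * sigV i i') = (if i'' = i' then 1 else 0)" for i'' i'
    using s2 unfolding s2_module_def by blast
  have "(\<Sum>i\<in>UNIV. scale (\<Sum>i'\<in>UNIV. dual_gen sigV i' i * al i')
            (\<Sum>p\<in>UNIV. scale (black_gen sigV sigW p (i, j)) (M p)))
      = (\<Sum>i\<in>UNIV. \<Sum>i'\<in>UNIV. \<Sum>i''\<in>UNIV. \<Sum>j'\<in>UNIV.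
           scale ((sigV i'' i * sigV i i') * (al i' * sigW j' j)) (M (i'', j')))"
    apply (simp only: V.scale_sum_left)
    apply (simp only: V.scale_sum_right V.scale_scale sum_UNIV_prod)
    by (simp add: black_gen_def dual_gen_def mult_ac)
  also have "\<dots> = (\<Sum>i'\<in>UNIV. \<Sum>i''\<in>UNIV. \<Sum>j'\<in>UNIV. \<Sum>i\<in>UNIV.
           scale ((sigV i'' i * sigV i i') * (al i' * sigW j' j)) (M (i'', j')))"
    by (rule sum_pull3[symmetric])
  also have "\<dots> = (\<Sum>i'\<in>UNIV. \<Sum>i''\<in>UNIV. \<Sum>j'\<in>UNIV.
           scale ((if i'' = i' then 1 else 0) * (al i' * sigW j' j)) (M (i'', j')))"
    by (simp add: V.scale_sum_left[symmetric] sum_distrib_right[symmetric] d)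
  also have "\<dots> = (\<Sum>i'\<in>UNIV. \<Sum>j'\<in>UNIV. scale (al i' * sigW j' j) (M (i', j')))"
  proof (intro sum.cong refl)
    fix i'
    have "(\<Sum>i''\<in>UNIV. \<Sum>j'\<in>UNIV. scale ((if i'' = i' then 1 else 0) * (al i' * sigW j' j)) (M (i'', j')))
        = (\<Sum>i''\<in>UNIV. if i'' = i' then (\<Sum>j'\<in>UNIV. scale (al i' * sigW j' j) (M (i'', j'))) else 0)"
      by (intro sum.cong refl) auto
    also have "\<dots> = (\<Sum>j'\<in>UNIV. scale (al i' * sigW j' j) (M (i', j')))" by simp
    finally show "(\<Sum>i''\<in>UNIV. \<Sum>j'\<in>UNIV. scale ((if i'' = i' then 1 else 0) * (al i' * sigW j' j)) (M (i'', j')))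
        = (\<Sum>j'\<in>UNIV. scale (al i' * sigW j' j) (M (i', j')))" .
  qed
  also have "\<dots> = (\<Sum>j'\<in>UNIV. scale (sigW j' j) (\<Sum>i\<in>UNIV. scale (al i) (M (i, j'))))"
    by (subst sum.swap) (simp add: V.scale_sum_right mult.commute)
  finally show ?thesis by simp
qed


lemma fwd:
  fixes nu :: "'i \<Rightarrow> ('y \<Rightarrow>\<^sub>0 'k) \<Rightarrow> ('y \<Rightarrow>\<^sub>0 'k) \<Rightarrow> ('y \<Rightarrow>\<^sub>0 'k)"
    and sigV :: "'i \<Rightarrow> 'i \<Rightarrow> 'k" and sigW :: "'j \<Rightarrow> 'j \<Rightarrow> 'k"
  assumes OV: "bin_quad_operad sigV R" and OW: "bin_quad_operad sigW S"
    and A: "is_algebra scale (black_gen sigV sigW) (black_rel R S) mu"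
    and B: "is_algebra fs_scale (dual_gen sigV) (orth R) nu"
  shows "is_algebra (tensor_scale scale) sigW S (tensor_ops scale nu mu)"
proof -
  note B' = B[unfolded is_algebra_def]
  note A' = A[unfolded is_algebra_def]
  have NU: "\<forall>i. bilinear_op fs_scale (nu i)" using B' by (rule conjunct1)
  have Beq: "(\<Sum>i'\<in>UNIV. fs_scale (dual_gen sigV i' i) (nu i' x y)) = nu i y x" for i x y
    by (rule B'[THEN conjunct2, THEN conjunct1, rule_format])
  have Brel: "eval3 fs_scale nu u x1 x2 x3 = 0" if "u \<in> orth R" for u x1 x2 x3
    using B'[THEN conjunct2, THEN conjunct2, rule_format] that .
  have Aeq: "(\<Sum>p\<in>UNIV. scale (black_gen sigV sigW p ij) (mu p x y)) = mu ij y x" for ij x y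
    by (rule A'[THEN conjunct2, THEN conjunct1, rule_format])
  have Arel: "eval3 scale mu rho x1 x2 x3 = 0" if "rho \<in> black_rel R S" for rho x1 x2 x3
    using A'[THEN conjunct2, THEN conjunct2, rule_format] that .
  have s2: "s2_module sigV" using OV unfolding bin_quad_operad_def by (rule conjunct1)
  have linR: "lin_subspace R" using OV unfolding bin_quad_operad_def by blast
  show ?thesis unfolding is_algebra_def
  proof (intro conjI allI ballI)
    fix j show "bilinear_op (tensor_scale scale) (tensor_ops scale nu mu j)" by (rule tops_bilinear)
  next
    fix j T T'
    show "(\<Sum>j'\<in>UNIV. tensor_scale scale (sigW j' j) (tensor_ops scale nu mu j' T T')) = tensor_ops scale nu mu j T' T"
    proof (rule poly_mapping_eqI)
      fix h
      define al where "al i y1 y2 = lk (nu i (e1 y1) (e1 y2)) h" for i y1 y2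
      have al2: "lk (nu i (e1 y2) (e1 y1)) h = (\<Sum>i'\<in>UNIV. dual_gen sigV i' i * al i' y1 y2)" for i y1 y2
      proof -
        have "lk (nu i (e1 y2) (e1 y1)) h = lk (\<Sum>i'\<in>UNIV. fs_scale (dual_gen sigV i' i) (nu i' (e1 y1) (e1 y2))) h"
          by (simp only: Beq)
        then show ?thesis by (simp add: lookup_sum al_def)
      qed
      have "lk (\<Sum>j'\<in>UNIV. tensor_scale scale (sigW j' j) (tensor_ops scale nu mu j' T T')) h
          = (\<Sum>j'\<in>UNIV. scale (sigW j' j) (\<Sum>y1\<in>pk T. \<Sum>y2\<in>pk T'. \<Sum>i\<in>UNIV.
               scale (al i y1 y2) (mu (i,j') (lk T y1) (lk T' y2))))"
        by (simp only: lookup_sum lookup_tensor_scale[OF VS] tops_lk[OF finite_keys order_refl finite_keys order_refl] al_def)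
      also have "\<dots> = (\<Sum>y1\<in>pk T. \<Sum>y2\<in>pk T'. \<Sum>j'\<in>UNIV. scale (sigW j' j) (\<Sum>i\<in>UNIV.
               scale (al i y1 y2) (mu (i,j') (lk T y1) (lk T' y2))))"
        apply (simp only: V.scale_sum_right)
        by (rule sum_pull2[symmetric])
      also have "\<dots> = (\<Sum>y1\<in>pk T. \<Sum>y2\<in>pk T'. \<Sum>i\<in>UNIV.
               scale (\<Sum>i'\<in>UNIV. dual_gen sigV i' i * al i' y1 y2) (mu (i,j) (lk T' y2) (lk T y1)))"
      proof (intro sum.cong refl)
        fix y1 y2
        show "(\<Sum>j'\<in>UNIV. scale (sigW j' j) (\<Sum>i\<in>UNIV. scale (al i y1 y2) (mu (i, j') (lk T y1) (lk T' y2)))) =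
           (\<Sum>i\<in>UNIV. scale (\<Sum>i'\<in>UNIV. dual_gen sigV i' i * al i' y1 y2) (mu (i, j) (lk T' y2) (lk T y1)))"
          using key_equiv[OF s2, where al="\<lambda>i. al i y1 y2" and M="\<lambda>p. mu p (lk T y1) (lk T' y2)" and sigW=sigW and j=j]
          by (simp only: Aeq)
      qed
      also have "\<dots> = (\<Sum>y2\<in>pk T'. \<Sum>y1\<in>pk T. \<Sum>i\<in>UNIV.
               scale (lk (nu i (e1 y2) (e1 y1)) h) (mu (i,j) (lk T' y2) (lk T y1)))"
        by (subst sum.swap) (simp only: al2)
      also have "\<dots> = lk (tensor_ops scale nu mu j T' T) h"
        by (simp only: tops_lk[OF finite_keys order_refl finite_keys order_refl])
      finally show "lk (\<Sum>j'\<in>UNIV. tensor_scale scale (sigW j' j) (tensor_ops scale nu mu j' T T')) h = lk (tensor_ops scale nu mu j T' T) h" .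
    qed
  next
    fix s T1 T2 T3 assume sS: "s \<in> S"
    show "eval3 (tensor_scale scale) (tensor_ops scale nu mu) s T1 T2 T3 = 0"
    proof (rule poly_mapping_eqI)
      fix h
      define tau where "tau y1 y2 y3 i k c = lk (tree_eval nu i k c (e1 y1) (e1 y2) (e1 y3)) h" for y1 y2 y3 i k c
      have tauR: "tau y1 y2 y3 \<in> R" for y1 y2 y3
      proof -
        have "tau y1 y2 y3 \<in> orth (orth R)" unfolding orth_def[of "orth R"]
        proof (intro CollectI ballI)
          fix u assume "u \<in> orth R"
          then have "lk (eval3 fs_scale nu u (e1 y1) (e1 y2) (e1 y3)) h = 0" using Brel by simp
          then show "(\<Sum>i\<in>UNIV. \<Sum>k\<in>UNIV. \<Sum>c\<in>shapes. tau y1 y2 y3 i k c * u i k c) = 0"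
            by (simp add: eval3_def lookup_sum tau_def mult.commute)
        qed
        then show ?thesis using double_orth[OF linR] by blast
      qed
      have rho: "(\<lambda>(i, j) (k, l) c. tau y1 y2 y3 i k c * s j l c) \<in> black_rel R S" for y1 y2 y3
      proof -
        have "(\<lambda>(i, j) (k, l) c. tau y1 y2 y3 i k c * s j l c) \<in> {(\<lambda>(i, j) (k, l) c. r i k c * s j l c) | r s. r \<in> R \<and> s \<in> S}"
          using tauR sS by blast
        then show ?thesis unfolding black_rel_def lin_span_def by (intro InterI) blast
      qed
      have "lk (eval3 (tensor_scale scale) (tensor_ops scale nu mu) s T1 T2 T3) h
          = (\<Sum>j\<in>UNIV. \<Sum>l\<in>UNIV. \<Sum>c\<in>shapes. \<Sum>y1\<in>pk T1. \<Sum>y2\<in>pk T2. \<Sum>y3\<in>pk T3.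
              scale (s j l c) (\<Sum>i\<in>UNIV. \<Sum>k\<in>UNIV.
                scale (tau y1 y2 y3 i k c) (tree_eval mu (i,j) (k,l) c (lk T1 y1) (lk T2 y2) (lk T3 y3))))"
        unfolding eval3_def lookup_sum lookup_tensor_scale[OF VS] tops_tree[OF NU] V.scale_sum_right tau_def ..
      also have "\<dots> = (\<Sum>y1\<in>pk T1. \<Sum>y2\<in>pk T2. \<Sum>y3\<in>pk T3. \<Sum>j\<in>UNIV. \<Sum>l\<in>UNIV. \<Sum>c\<in>shapes.
              scale (s j l c) (\<Sum>i\<in>UNIV. \<Sum>k\<in>UNIV.
                scale (tau y1 y2 y3 i k c) (tree_eval mu (i,j) (k,l) c (lk T1 y1) (lk T2 y2) (lk T3 y3))))"
        by (rule sum_block33)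
      also have "\<dots> = (\<Sum>y1\<in>pk T1. \<Sum>y2\<in>pk T2. \<Sum>y3\<in>pk T3.
              eval3 scale mu (\<lambda>(i, j) (k, l) c. tau y1 y2 y3 i k c * s j l c) (lk T1 y1) (lk T2 y2) (lk T3 y3))"
        unfolding eval3_black ..
      also have "\<dots> = 0" using Arel[OF rho] by simp
      finally show "lk (eval3 (tensor_scale scale) (tensor_ops scale nu mu) s T1 T2 T3) h = lk 0 h" by simp
    qed
  qed
qed

end



definition scop :: "('y \<Rightarrow> 'y \<Rightarrow> ('y \<Rightarrow>\<^sub>0 'k::field)) \<Rightarrow> ('y \<Rightarrow>\<^sub>0 'k) \<Rightarrow> ('y \<Rightarrow>\<^sub>0 'k) \<Rightarrow> ('y \<Rightarrow>\<^sub>0 'k)" where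
  "scop M p q = (\<Sum>y1\<in>pk p. \<Sum>y2\<in>pk q. fs_scale (lk p y1 * lk q y2) (M y1 y2))"

interpretation FV: vector_space "fs_scale :: 'k::field \<Rightarrow> ('y \<Rightarrow>\<^sub>0 'k) \<Rightarrow> _" by (rule fs_vs)

lemma scop_sup:
  assumes "finite K1" "pk p \<subseteq> K1" "finite K2" "pk q \<subseteq> K2"
  shows "scop M p q = (\<Sum>y1\<in>K1. \<Sum>y2\<in>K2. fs_scale (lk p y1 * lk q y2) (M y1 y2))"
proof -
  have "scop M p q = (\<Sum>y1\<in>K1. \<Sum>y2\<in>pk q. fs_scale (lk p y1 * lk q y2) (M y1 y2))"
    unfolding scop_def by (rule sum.mono_neutral_left) (use assms in \<open>auto simp: in_keys_iff\<close>)
  also have "\<dots> = (\<Sum>y1\<in>K1. \<Sum>y2\<in>K2. fs_scale (lk p y1 * lk q y2) (M y1 y2))"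
    by (rule sum.cong[OF refl], rule sum.mono_neutral_left) (use assms in \<open>auto simp: in_keys_iff\<close>)
  finally show ?thesis .
qed

lemma scop_bil:
  fixes M :: "'y \<Rightarrow> 'y \<Rightarrow> ('y \<Rightarrow>\<^sub>0 'k::field)"
  shows "bilinear_op fs_scale (scop M)"
  unfolding bilinear_op_def
proof (intro conjI allI)
  fix x x' y :: "'y \<Rightarrow>\<^sub>0 'k" and c :: 'k
  have k: "pk (x + x') \<subseteq> pk x \<union> pk x'" by (rule keys_add)
  show "scop M (x + x') y = scop M x y + scop M x' y"
    apply (subst (1 2 3) scop_sup[of "pk x \<union> pk x'" _ "pk y"])
    using k by (auto simp: lookup_add distrib_right FV.scale_left_distrib sum.distrib)
  show "scop M (fs_scale c x) y = fs_scale c (scop M x y)"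
    apply (subst (1 2) scop_sup[of "pk x" _ "pk y"])
    by (auto simp: keys_fs_scale FV.scale_sum_right mult.assoc)
next
  fix x y y' :: "'y \<Rightarrow>\<^sub>0 'k" and c :: 'k
  have k: "pk (y + y') \<subseteq> pk y \<union> pk y'" by (rule keys_add)
  show "scop M x (y + y') = scop M x y + scop M x y'"
    apply (subst (1 2 3) scop_sup[of "pk x" _ "pk y \<union> pk y'"])
    using k by (auto simp: lookup_add distrib_left FV.scale_left_distrib sum.distrib)
  show "scop M x (fs_scale c y) = fs_scale c (scop M x y)"
    apply (subst (1 2) scop_sup[of "pk x" _ "pk y"])
    by (auto simp: keys_fs_scale FV.scale_sum_right mult_ac)
qed

lemma scop_basis: "scop M (e1 a) (e1 b) = M a b"
  by (simp add: scop_def)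

lemma scop_equiv:
  fixes M :: "'i::finite \<Rightarrow> 'y \<Rightarrow> 'y \<Rightarrow> ('y \<Rightarrow>\<^sub>0 'k::field)"
  assumes "\<forall>a b. (\<Sum>i'\<in>UNIV. fs_scale (D i' i) (M i' a b)) = M i b a"
  shows "(\<Sum>i'\<in>UNIV. fs_scale (D i' i) (scop (M i') p q)) = scop (M i) q p"
proof -
  have "(\<Sum>i'\<in>UNIV. fs_scale (D i' i) (scop (M i') p q))
      = (\<Sum>y1\<in>pk p. \<Sum>y2\<in>pk q. fs_scale (lk p y1 * lk q y2) (\<Sum>i'\<in>UNIV. fs_scale (D i' i) (M i' y1 y2)))"
    unfolding scop_def FV.scale_sum_right FV.scale_scale
    apply (rule trans[OF sum_pull2[symmetric]])
    by (simp add: mult.commute)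
  also have "\<dots> = (\<Sum>y1\<in>pk p. \<Sum>y2\<in>pk q. fs_scale (lk p y1 * lk q y2) (M i y2 y1))"
    using assms by simp
  also have "\<dots> = scop (M i) q p"
    unfolding scop_def by (subst sum.swap) (simp add: mult.commute)
  finally show ?thesis .
qed


lemma tri_nested:
  fixes nu :: "'i \<Rightarrow> ('y \<Rightarrow>\<^sub>0 'k::field) \<Rightarrow> ('y \<Rightarrow>\<^sub>0 'k) \<Rightarrow> ('y \<Rightarrow>\<^sub>0 'k)"
  assumes NU: "\<forall>i. bilinear_op fs_scale (nu i)"
  shows "nu i (nu k p q) s = (\<Sum>y1\<in>pk p. \<Sum>y2\<in>pk q. \<Sum>y3\<in>pk s.
      fs_scale (lk p y1 * lk q y2 * lk s y3) (nu i (nu k (e1 y1) (e1 y2)) (e1 y3)))"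
proof -
  have 1: "nu k p q = (\<Sum>y1\<in>pk p. fs_scale (lk p y1) (\<Sum>y2\<in>pk q. fs_scale (lk q y2) (nu k (e1 y1) (e1 y2))))"
    apply (subst fs_expand1[of "nu k" "pk p" p, OF _ finite_keys order_refl])
    using NU apply blast
    apply (rule sum.cong[OF refl])
    apply (subst fs_expand2[of "nu k" "pk q" q, OF _ finite_keys order_refl])
    using NU by blast+
  have 2: "nu i X s = (\<Sum>y3\<in>pk s. fs_scale (lk s y3) (nu i X (e1 y3)))" for X
    by (rule fs_expand2[OF _ finite_keys order_refl]) (use NU in blast)
  have "nu i (nu k p q) s = (\<Sum>y1\<in>pk p. fs_scale (lk p y1) (\<Sum>y2\<in>pk q. fs_scale (lk q y2) (nu i (nu k (e1 y1) (e1 y2)) s)))"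
    unfolding 1 using NU by (simp only: bil_sum1[of fs_scale "nu i"] bil_scale1[of fs_scale "nu i"])
  also have "\<dots> = (\<Sum>y1\<in>pk p. fs_scale (lk p y1) (\<Sum>y2\<in>pk q. fs_scale (lk q y2)
      (\<Sum>y3\<in>pk s. fs_scale (lk s y3) (nu i (nu k (e1 y1) (e1 y2)) (e1 y3)))))"
    by (subst 2) (rule refl)
  also have "\<dots> = (\<Sum>y1\<in>pk p. \<Sum>y2\<in>pk q. \<Sum>y3\<in>pk s.
      fs_scale (lk p y1 * lk q y2 * lk s y3) (nu i (nu k (e1 y1) (e1 y2)) (e1 y3)))"
    by (simp only: FV.scale_sum_right FV.scale_scale mult.assoc)
  finally show ?thesis .
qed

lemma tri_tree:
  fixes nu :: "'i \<Rightarrow> ('y \<Rightarrow>\<^sub>0 'k::field) \<Rightarrow> ('y \<Rightarrow>\<^sub>0 'k) \<Rightarrow> ('y \<Rightarrow>\<^sub>0 'k)"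
  assumes NU: "\<forall>i. bilinear_op fs_scale (nu i)"
  shows "tree_eval nu i k c p q s = (\<Sum>y1\<in>pk p. \<Sum>y2\<in>pk q. \<Sum>y3\<in>pk s.
      fs_scale (lk p y1 * lk q y2 * lk s y3) (tree_eval nu i k c (e1 y1) (e1 y2) (e1 y3)))"
proof (cases c)
  case Sh1
  show ?thesis unfolding Sh1 tree_eval.simps by (subst tri_nested[OF NU]) (rule refl)
next
  case Sh2
  show ?thesis unfolding Sh2 tree_eval.simps
    apply (subst tri_nested[OF NU])
    apply (rule trans[OF sum_rot3[symmetric]])
    by (simp only: mult_ac)
next
  case Sh3
  show ?thesis unfolding Sh3 tree_eval.simps
    apply (subst tri_nested[OF NU])
    apply (rule trans[OF sum_rot3])
    by (simp only: mult_ac)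
qed

lemma tri_eval3:
  fixes nu :: "'i::finite \<Rightarrow> ('y \<Rightarrow>\<^sub>0 'k::field) \<Rightarrow> ('y \<Rightarrow>\<^sub>0 'k) \<Rightarrow> ('y \<Rightarrow>\<^sub>0 'k)"
  assumes NU: "\<forall>i. bilinear_op fs_scale (nu i)"
  shows "eval3 fs_scale nu u p q s = (\<Sum>y1\<in>pk p. \<Sum>y2\<in>pk q. \<Sum>y3\<in>pk s.
      fs_scale (lk p y1 * lk q y2 * lk s y3) (eval3 fs_scale nu u (e1 y1) (e1 y2) (e1 y3)))"
proof -
  have "eval3 fs_scale nu u p q s = (\<Sum>i\<in>UNIV. \<Sum>k\<in>UNIV. \<Sum>c\<in>shapes. \<Sum>y1\<in>pk p. \<Sum>y2\<in>pk q. \<Sum>y3\<in>pk s.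
      fs_scale (u i k c * (lk p y1 * lk q y2 * lk s y3)) (tree_eval nu i k c (e1 y1) (e1 y2) (e1 y3)))"
    unfolding eval3_def
    apply (intro sum.cong refl)
    apply (subst tri_tree[OF NU])
    by (simp only: FV.scale_sum_right FV.scale_scale)
  also have "\<dots> = (\<Sum>y1\<in>pk p. \<Sum>y2\<in>pk q. \<Sum>y3\<in>pk s. \<Sum>i\<in>UNIV. \<Sum>k\<in>UNIV. \<Sum>c\<in>shapes.
      fs_scale (u i k c * (lk p y1 * lk q y2 * lk s y3)) (tree_eval nu i k c (e1 y1) (e1 y2) (e1 y3)))"
    by (rule sum_block33)
  also have "\<dots> = (\<Sum>y1\<in>pk p. \<Sum>y2\<in>pk q. \<Sum>y3\<in>pk s.
      fs_scale (lk p y1 * lk q y2 * lk s y3) (eval3 fs_scale nu u (e1 y1) (e1 y2) (e1 y3)))"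
    unfolding eval3_def by (simp only: FV.scale_sum_right FV.scale_scale mult.commute)
  finally show ?thesis .
qed

lemma rel_from_basis:
  fixes nu :: "'i::finite \<Rightarrow> ('y \<Rightarrow>\<^sub>0 'k::field) \<Rightarrow> ('y \<Rightarrow>\<^sub>0 'k) \<Rightarrow> ('y \<Rightarrow>\<^sub>0 'k)"
  assumes NU: "\<forall>i. bilinear_op fs_scale (nu i)"
    and "\<And>y1 y2 y3. eval3 fs_scale nu u (e1 y1) (e1 y2) (e1 y3) = 0"
  shows "eval3 fs_scale nu u p q s = 0"
  by (subst tri_eval3[OF NU]) (simp add: assms(2))


datatype 'i bb = G nat | H 'i nat nat | Z

instance bb :: (countable) countable by countable_datatype

definition E :: "'i::countable bb \<Rightarrow> (nat \<Rightarrow>\<^sub>0 'k::field)" where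
  "E b = Poly_Mapping.single (to_nat b) 1"

definition rho :: "('i::finite \<Rightarrow> 'i \<Rightarrow> 'k::field) \<Rightarrow> ('i, 'k) tree3 \<Rightarrow> 'i \<Rightarrow> 'i \<Rightarrow> nat \<Rightarrow> nat \<Rightarrow> nat \<Rightarrow> 'k" where
  "rho D r i k a b c = (if a = 0 \<and> b = 1 \<and> c = 2 then r i k Sh1
     else if a = 1 \<and> b = 2 \<and> c = 0 then r i k Sh2
     else if a = 0 \<and> b = 2 \<and> c = 1 then (\<Sum>k''\<in>UNIV. D k'' k * r i k'' Sh3) else 0)"

definition Mb :: "('i::finite \<Rightarrow> 'i \<Rightarrow> 'k::field) \<Rightarrow> ('i, 'k) tree3 \<Rightarrow> 'i \<Rightarrow> 'i bb \<Rightarrow> 'i bb \<Rightarrow> (nat \<Rightarrow>\<^sub>0 'k)" where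
  "Mb D r i b1 b2 = (case b1 of
      G a \<Rightarrow> (case b2 of
          G b \<Rightarrow> (if a < b \<and> b < 3 then E (H i a b)
               else if b < a \<and> a < 3 then (\<Sum>k'\<in>UNIV. fs_scale (D k' i) (E (H k' b a))) else 0)
        | H k a' b' \<Rightarrow> (\<Sum>i'\<in>UNIV. fs_scale (D i' i) (fs_scale (rho D r i' k a' b' a) (E (Z::'i bb))))
        | Z \<Rightarrow> 0)
    | H k a b \<Rightarrow> (case b2 of G c \<Rightarrow> fs_scale (rho D r i k a b c) (E (Z::'i bb)) | _ \<Rightarrow> 0)
    | Z \<Rightarrow> 0)"

lemma Mb_simps[simp]:
  fixes Dm :: "'i::finite \<Rightarrow> 'i \<Rightarrow> 'k::field"
  shows
  "Mb Dm rr k (G a) (G b) = (if a < b \<and> b < 3 then E (H k a b)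
      else if b < a \<and> a < 3 then (\<Sum>k'\<in>UNIV. fs_scale (Dm k' k) (E (H k' b a))) else 0)"
  "Mb Dm rr i (H k a b) (G c) = fs_scale (rho Dm rr i k a b c) (E (Z::'i::finite bb))"
  "Mb Dm rr i (G c) (H k a b) = (\<Sum>i'\<in>UNIV. fs_scale (Dm i' i) (fs_scale (rho Dm rr i' k a b c) (E (Z::'i::finite bb))))"
  "Mb Dm rr i (H k a b) (H k' a' b') = 0"
  "Mb Dm rr i (H k a b) Z = 0"
  "Mb Dm rr i (G a) Z = 0"
  "Mb Dm rr i Z x = 0"
  by (simp_all add: Mb_def)

definition Mn :: "('i::finite \<Rightarrow> 'i \<Rightarrow> 'k::field) \<Rightarrow> ('i, 'k) tree3 \<Rightarrow> 'i \<Rightarrow> nat \<Rightarrow> nat \<Rightarrow> (nat \<Rightarrow>\<^sub>0 'k)" where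
  "Mn D r i y1 y2 = (if y1 \<in> range (to_nat :: 'i bb \<Rightarrow> nat) \<and> y2 \<in> range (to_nat :: 'i bb \<Rightarrow> nat)
     then Mb D r i (from_nat y1) (from_nat y2) else 0)"

definition nuB :: "('i::finite \<Rightarrow> 'i \<Rightarrow> 'k::field) \<Rightarrow> ('i, 'k) tree3 \<Rightarrow> 'i \<Rightarrow> (nat \<Rightarrow>\<^sub>0 'k) \<Rightarrow> (nat \<Rightarrow>\<^sub>0 'k) \<Rightarrow> (nat \<Rightarrow>\<^sub>0 'k)" where
  "nuB D r i = scop (Mn D r i)"

lemma nuB_bil: "\<forall>i. bilinear_op fs_scale (nuB D r i)"
  unfolding nuB_def using scop_bil by blast

lemma nuB_basis: "nuB D r i (E b1) (E b2) = Mb D r i b1 b2"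
  unfolding nuB_def E_def by (simp add: scop_basis Mn_def)

lemma Mb_equiv:
  fixes D :: "'i::finite \<Rightarrow> 'i \<Rightarrow> 'k::field"
  assumes DD: "\<And>a c. (\<Sum>b\<in>UNIV. D a b * D b c) = (if a = c then 1 else 0)"
  shows "(\<Sum>i'\<in>UNIV. fs_scale (D i' i) (Mb D r i' b1 b2)) = Mb D r i b2 b1"
proof -
  have dd: "(\<Sum>i'\<in>UNIV. fs_scale (D i' i) (\<Sum>k'\<in>UNIV. fs_scale (D k' i') (X k'))) = X i" for X :: "'i \<Rightarrow> nat \<Rightarrow>\<^sub>0 'k"
  proof -
    have "(\<Sum>i'\<in>UNIV. fs_scale (D i' i) (\<Sum>k'\<in>UNIV. fs_scale (D k' i') (X k')))
        = (\<Sum>k'\<in>UNIV. fs_scale (\<Sum>i'\<in>UNIV. D k' i' * D i' i) (X k'))"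
      apply (simp only: FV.scale_sum_right FV.scale_scale FV.scale_sum_left)
      apply (subst sum.swap)
      by (simp only: mult.commute)
    also have "\<dots> = (\<Sum>k'\<in>UNIV. if k' = i then X k' else 0)"
      by (intro sum.cong refl) (simp add: DD)
    also have "\<dots> = X i" by simp
    finally show ?thesis .
  qed
  show ?thesis
  proof (cases b1)
    case (G a)
    show ?thesis
    proof (cases b2)
      case (G b)
      show ?thesis
      proof (cases "a < b \<and> b < 3")
        case True then show ?thesis using \<open>b1 = G a\<close> \<open>b2 = G b\<close> by simp
      next
        case f1: False
        show ?thesis
        proof (cases "b < a \<and> a < 3")
          case True then show ?thesis using \<open>b1 = G a\<close> \<open>b2 = G b\<close> dd[of "\<lambda>k'. E (H k' b a)"] by simp
        next
          case False
          have "Mb D r i' (G a) (G b) = 0" for i' using f1 False by auto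
          moreover have "Mb D r i (G b) (G a) = 0" using f1 False by auto
          ultimately show ?thesis using \<open>b1 = G a\<close> \<open>b2 = G b\<close> by simp
        qed
      qed
    next
      case (H k a' b')
      then show ?thesis using \<open>b1 = G a\<close> dd[of "\<lambda>i''. fs_scale (rho D r i'' k a' b' a) (E (Z::'i::finite bb))"] by simp
    next
      case Z
      then show ?thesis using \<open>b1 = G a\<close> by simp
    qed
  next
    case (H k a b)
    show ?thesis by (cases b2) (simp_all add: H)
  next
    case Z
    show ?thesis by (cases b2) (simp_all add: Z)
  qed
qed

lemma nuB_equiv:
  fixes D :: "'i::finite \<Rightarrow> 'i \<Rightarrow> 'k::field"
  assumes DD: "\<And>a c. (\<Sum>b\<in>UNIV. D a b * D b c) = (if a = c then 1 else 0)"
  shows "(\<Sum>i'\<in>UNIV. fs_scale (D i' i) (nuB D r i' x y)) = nuB D r i y x"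
  unfolding nuB_def
proof (rule scop_equiv, intro allI)
  fix a b
  show "(\<Sum>i'\<in>UNIV. fs_scale (D i' i) (Mn D r i' a b)) = Mn D r i b a"
    unfolding Mn_def using Mb_equiv[OF DD] by (auto simp: FV.scale_sum_right)
qed


lemma keys_E: "pk (E b :: nat \<Rightarrow>\<^sub>0 'k::field) = {to_nat b}"
  by (simp add: E_def)

lemma keys_sum_sub: "x \<in> pk (sum f A) \<Longrightarrow> \<exists>a\<in>A. x \<in> pk (f a)"
  using keys_sum[of f A] by blast

lemma Mb_keys:
  fixes D :: "'i::finite \<Rightarrow> 'i \<Rightarrow> 'k::field"
  assumes "u \<in> pk (Mb D r k A B)"
  shows "(\<exists>a b k'. A = G a \<and> B = G b \<and> a \<noteq> b \<and> a < 3 \<and> b < 3 \<and> u = to_nat (H k' (min a b) (max a b) :: 'i bb))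
         \<or> u = to_nat (Z :: 'i bb)"
proof (cases A)
  case (G a)
  show ?thesis
  proof (cases B)
    case (G b)
    show ?thesis
    proof (cases "a < b \<and> b < 3")
      case True
      then show ?thesis using assms \<open>A = G a\<close> \<open>B = G b\<close> by (auto simp: keys_E)
    next
      case f: False
      show ?thesis
      proof (cases "b < a \<and> a < 3")
        case True
        then have uin: "u \<in> pk (\<Sum>k'\<in>UNIV. fs_scale (D k' k) (E (H k' b a) :: nat \<Rightarrow>\<^sub>0 'k))"
          using assms \<open>A = G a\<close> \<open>B = G b\<close> f by simp
        obtain k' where "u \<in> pk (fs_scale (D k' k) (E (H k' b a) :: nat \<Rightarrow>\<^sub>0 'k))"
          using keys_sum_sub[OF uin] by blast
        then have "u = to_nat (H k' b a :: 'i bb)" using keys_fs_scale keys_E by (metis in_mono singletonD)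
        then show ?thesis using True \<open>A = G a\<close> \<open>B = G b\<close> by auto
      next
        case False
        then show ?thesis using assms \<open>A = G a\<close> \<open>B = G b\<close> f by auto
      qed
    qed
  next
    case (H k2 a2 b2)
    then have uin: "u \<in> pk (\<Sum>i'\<in>UNIV. fs_scale (D i' k) (fs_scale (rho D r i' k2 a2 b2 a) (E (Z::'i bb)) :: nat \<Rightarrow>\<^sub>0 'k))"
      using assms \<open>A = G a\<close> by simp
    obtain i' where "u \<in> pk (fs_scale (D i' k) (fs_scale (rho D r i' k2 a2 b2 a) (E (Z::'i bb)) :: nat \<Rightarrow>\<^sub>0 'k))"
      using keys_sum_sub[OF uin] by blast
    then have "u = to_nat (Z :: 'i bb)" using keys_fs_scale keys_E by (metis in_mono singletonD)
    then show ?thesis by blast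
  next
    case Z
    then show ?thesis using assms \<open>A = G a\<close> by simp
  qed
next
  case (H k2 a2 b2)
  show ?thesis
  proof (cases B)
    case (G c)
    then have "u \<in> pk (fs_scale (rho D r k k2 a2 b2 c) (E (Z::'i bb)) :: nat \<Rightarrow>\<^sub>0 'k)"
      using assms \<open>A = H k2 a2 b2\<close> by simp
    then have "u = to_nat (Z :: 'i bb)" using keys_fs_scale keys_E by (metis in_mono singletonD)
    then show ?thesis by blast
  qed (use assms \<open>A = H k2 a2 b2\<close> in simp_all)
next
  case Z
  then show ?thesis using assms by simp
qed

lemma Mb_nz_H:
  fixes D :: "'i::finite \<Rightarrow> 'i \<Rightarrow> 'k::field"
  assumes "Mb D r i (H k p q) C \<noteq> 0"
  shows "\<exists>c. C = G c \<and> ((p = 0 \<and> q = 1 \<and> c = 2) \<or> (p = 1 \<and> q = 2 \<and> c = 0) \<or> (p = 0 \<and> q = 2 \<and> c = 1))"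
proof (cases C)
  case (G c)
  then have "rho D r i k p q c \<noteq> 0" using assms by auto
  then show ?thesis using G unfolding rho_def by (auto split: if_splits)
qed (use assms in simp_all)

definition perm3 :: "nat \<Rightarrow> nat \<Rightarrow> nat \<Rightarrow> bool" where
  "perm3 a b c \<longleftrightarrow> a < 3 \<and> b < 3 \<and> c < 3 \<and> a \<noteq> b \<and> b \<noteq> c \<and> a \<noteq> c"

lemma nuB_nested_nz:
  fixes D :: "'i::finite \<Rightarrow> 'i \<Rightarrow> 'k::field"
  assumes "nuB D r i (nuB D r k (e1 y1) (e1 y2)) (e1 y3) \<noteq> 0"
  shows "\<exists>a b c. y1 = to_nat (G a :: 'i bb) \<and> y2 = to_nat (G b :: 'i bb) \<and> y3 = to_nat (G c :: 'i bb) \<and> perm3 a b c"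
proof -
  let ?P = "Mn D r k y1 y2"
  have P: "nuB D r k (e1 y1) (e1 y2) = ?P" unfolding nuB_def by (rule scop_basis)
  have "nuB D r i ?P (e1 y3) = (\<Sum>u\<in>pk ?P. \<Sum>y\<in>pk (e1 y3 :: nat \<Rightarrow>\<^sub>0 'k). fs_scale (lk ?P u * lk (e1 y3 :: nat \<Rightarrow>\<^sub>0 'k) y) (Mn D r i u y))"
    unfolding nuB_def scop_def ..
  also have "\<dots> = (\<Sum>u\<in>pk ?P. fs_scale (lk ?P u) (Mn D r i u y3))" by simp
  finally have "(\<Sum>u\<in>pk ?P. fs_scale (lk ?P u) (Mn D r i u y3)) \<noteq> 0" using assms P by simp
  then obtain u where u: "u \<in> pk ?P" "Mn D r i u y3 \<noteq> 0"
    by (metis (no_types, lifting) FV.scale_zero_right sum.neutral)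
  have "?P \<noteq> 0" using u(1) by auto
  then obtain A B where AB: "y1 = to_nat (A :: 'i bb)" "y2 = to_nat (B :: 'i bb)" "?P = Mb D r k A B"
    unfolding Mn_def by (auto split: if_splits)
  obtain U C where UC: "u = to_nat (U :: 'i bb)" "y3 = to_nat (C :: 'i bb)" "Mb D r i U C \<noteq> 0"
    using u(2) unfolding Mn_def by (auto split: if_splits)
  have "u \<in> pk (Mb D r k A B)" using u(1) AB(3) by simp
  from Mb_keys[OF this] show ?thesis
  proof
    assume "\<exists>a b k'. A = G a \<and> B = G b \<and> a \<noteq> b \<and> a < 3 \<and> b < 3 \<and> u = to_nat (H k' (min a b) (max a b) :: 'i bb)"
    then obtain a b k' where ab: "A = G a" "B = G b" "a \<noteq> b" "a < 3" "b < 3" "u = to_nat (H k' (min a b) (max a b) :: 'i bb)"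
      by blast
    have "U = H k' (min a b) (max a b)" using ab(6) UC(1) by simp
    then obtain c where c: "C = G c" "(min a b = 0 \<and> max a b = 1 \<and> c = 2) \<or> (min a b = 1 \<and> max a b = 2 \<and> c = 0) \<or> (min a b = 0 \<and> max a b = 2 \<and> c = 1)"
      using Mb_nz_H UC(3) by blast
    have "perm3 a b c" unfolding perm3_def using c(2) ab(3,4,5) by (auto simp: min_def max_def split: if_splits)
    then show ?thesis using AB ab c UC by blast
  next
    assume "u = to_nat (Z :: 'i bb)"
    then have "U = Z" using UC(1) by simp
    then show ?thesis using UC(3) by simp
  qed
qed


lemma perm3_rot: "perm3 a b c \<Longrightarrow> perm3 b c a" unfolding perm3_def by auto
lemma perm3_cases: "perm3 a b c \<Longrightarrow> (a, b, c) \<in> {(0,1,2), (1,2,0), (2,0,1), (1,0,2), (0,2,1), (2,1,0)}"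
  unfolding perm3_def by (cases a; cases b; cases c) (auto simp: less_Suc_eq numeral_3_eq_3 numeral_2_eq_2)

lemma nuB_tree_nz:
  fixes D :: "'i::finite \<Rightarrow> 'i \<Rightarrow> 'k::field"
  assumes "tree_eval (nuB D r) i k c (e1 y1) (e1 y2) (e1 y3) \<noteq> 0"
  shows "\<exists>a b c. y1 = to_nat (G a :: 'i bb) \<and> y2 = to_nat (G b :: 'i bb) \<and> y3 = to_nat (G c :: 'i bb) \<and> perm3 a b c"
proof (cases c)
  case Sh1
  then show ?thesis using assms nuB_nested_nz[of D r i k y1 y2 y3] by simp
next
  case Sh2
  then have "\<exists>a b c. y2 = to_nat (G a :: 'i bb) \<and> y3 = to_nat (G b :: 'i bb) \<and> y1 = to_nat (G c :: 'i bb) \<and> perm3 a b c"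
    using assms nuB_nested_nz[of D r i k y2 y3 y1] by simp
  then show ?thesis using perm3_rot by blast
next
  case Sh3
  then have "\<exists>a b c. y3 = to_nat (G a :: 'i bb) \<and> y1 = to_nat (G b :: 'i bb) \<and> y2 = to_nat (G c :: 'i bb) \<and> perm3 a b c"
    using assms nuB_nested_nz[of D r i k y3 y1 y2] by simp
  then show ?thesis using perm3_rot by blast
qed

lemma nuB_id:
  fixes D :: "'i::finite \<Rightarrow> 'i \<Rightarrow> 'k::field"
  assumes DD: "\<And>a c. (\<Sum>b\<in>UNIV. D a b * D b c) = (if a = c then 1 else 0)"
  shows "tree_eval (nuB D r) i k c (E (G 0 :: 'i bb)) (E (G 1 :: 'i bb)) (E (G 2 :: 'i bb)) = fs_scale (r i k c) (E (Z :: 'i bb))"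
proof (cases c)
  case Sh1
  then show ?thesis by (simp add: nuB_basis rho_def)
next
  case Sh2
  then show ?thesis by (simp add: nuB_basis rho_def)
next
  case Sh3
  have BL: "bilinear_op fs_scale (nuB D r i)" using nuB_bil by blast
  have "tree_eval (nuB D r) i k Sh3 (E (G 0 :: 'i bb)) (E (G 1 :: 'i bb)) (E (G 2 :: 'i bb)) =
      nuB D r i (\<Sum>k'\<in>UNIV. fs_scale (D k' k) (E (H k' 0 2 :: 'i bb))) (E (G 1 :: 'i bb))"
    by (simp add: nuB_basis)
  also have "\<dots> = (\<Sum>k'\<in>UNIV. fs_scale (D k' k) (fs_scale (\<Sum>k''\<in>UNIV. D k'' k' * r i k'' Sh3) (E (Z :: 'i bb))))"
    by (simp add: bil_sum1[OF BL] bil_scale1[OF BL] nuB_basis rho_def)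
  also have "\<dots> = fs_scale (\<Sum>k''\<in>UNIV. (\<Sum>k'\<in>UNIV. D k'' k' * D k' k) * r i k'' Sh3) (E (Z :: 'i bb))"
    apply (simp only: FV.scale_scale FV.scale_sum_left[symmetric])
    apply (rule arg_cong[where f="\<lambda>x. fs_scale x _"])
    apply (simp only: sum_distrib_left sum_distrib_right)
    apply (subst sum.swap)
    by (simp only: mult_ac)
  also have "\<dots> = fs_scale (r i k Sh3) (E (Z :: 'i bb))"
    by (simp add: DD if_distrib[of "\<lambda>x. x * _"] cong: if_cong)
  finally show ?thesis using Sh3 by simp
qed


lemma dualDD:
  fixes sig :: "'i::finite \<Rightarrow> 'i \<Rightarrow> 'k::field"
  assumes "s2_module sig"
  shows "(\<Sum>b\<in>UNIV. dual_gen sig a b * dual_gen sig b c) = (if a = c then 1 else 0)"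
proof -
  have "(\<Sum>b\<in>UNIV. dual_gen sig a b * dual_gen sig b c) = (\<Sum>b\<in>UNIV. sig c b * sig b a)"
    unfolding dual_gen_def by (simp add: mult.commute)
  also have "\<dots> = (if c = a then 1 else 0)" using assms unfolding s2_module_def by blast
  finally show ?thesis by auto
qed

lemma nuB_rel:
  fixes sigV :: "'i::finite \<Rightarrow> 'i \<Rightarrow> 'k::field"
  assumes OV: "bin_quad_operad sigV R" and rR: "r \<in> R" and u: "u \<in> orth R"
  shows "eval3 fs_scale (nuB (dual_gen sigV) r) u p q s = 0"
proof -
  define D where "D = dual_gen sigV"
  define nu where "nu = nuB D r"
  have s2: "s2_module sigV" using OV unfolding bin_quad_operad_def by blast
  have DD: "(\<Sum>b\<in>UNIV. D a b * D b c) = (if a = c then 1 else 0)" for a c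
    unfolding D_def by (rule dualDD[OF s2])
  have BL: "\<forall>i. bilinear_op fs_scale (nu i)" unfolding nu_def by (rule nuB_bil)
  have EQ: "\<forall>i x y. (\<Sum>i'\<in>UNIV. fs_scale (D i' i) (nu i' x y)) = nu i y x"
    unfolding nu_def using nuB_equiv[OF DD] by blast
  have Rrot: "\<forall>r\<in>R. rot_act r \<in> R" and Rswap: "\<forall>r\<in>R. swap_act sigV r \<in> R"
    using OV unfolding bin_quad_operad_def by blast+
  define Q where "Q a b c \<longleftrightarrow> (\<forall>u\<in>orth R. eval3 fs_scale nu u (E (G a :: 'i bb)) (E (G b :: 'i bb)) (E (G c :: 'i bb)) = 0)" for a b c
  have Q0: "Q 0 1 2" unfolding Q_def
  proof
    fix u assume uR: "u \<in> orth R"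
    have "eval3 fs_scale nu u (E (G 0 :: 'i bb)) (E (G 1 :: 'i bb)) (E (G 2 :: 'i bb))
        = (\<Sum>i\<in>UNIV. \<Sum>k\<in>UNIV. \<Sum>c\<in>shapes. fs_scale (u i k c) (fs_scale (r i k c) (E (Z :: 'i bb))))"
      unfolding eval3_def nu_def using nuB_id[OF DD] by simp
    also have "\<dots> = fs_scale (\<Sum>i\<in>UNIV. \<Sum>k\<in>UNIV. \<Sum>c\<in>shapes. u i k c * r i k c) (E (Z :: 'i bb))"
      by (simp only: FV.scale_scale FV.scale_sum_left)
    also have "\<dots> = 0" using uR rR unfolding orth_def by simp
    finally show "eval3 fs_scale nu u (E (G 0 :: 'i bb)) (E (G 1 :: 'i bb)) (E (G 2 :: 'i bb)) = 0" .
  qed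
  have QR: "Q b c a" if "Q a b c" for a b c unfolding Q_def
  proof
    fix u assume uR: "u \<in> orth R"
    have "rot_act u \<in> orth R" by (rule orth_rot[OF uR Rrot])
    then have "eval3 fs_scale nu (rot_act u) (E (G a :: 'i bb)) (E (G b :: 'i bb)) (E (G c :: 'i bb)) = 0"
      using that unfolding Q_def by blast
    then show "eval3 fs_scale nu u (E (G b :: 'i bb)) (E (G c :: 'i bb)) (E (G a :: 'i bb)) = 0"
      by (simp only: eval3_rot)
  qed
  have QS: "Q b a c" if "Q a b c" for a b c unfolding Q_def
  proof
    fix u assume uR: "u \<in> orth R"
    have "swap_act D u \<in> orth R" unfolding D_def by (rule orth_swap[OF uR Rswap])
    then have "eval3 fs_scale nu (swap_act D u) (E (G a :: 'i bb)) (E (G b :: 'i bb)) (E (G c :: 'i bb)) = 0"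
      using that unfolding Q_def by blast
    then show "eval3 fs_scale nu u (E (G b :: 'i bb)) (E (G a :: 'i bb)) (E (G c :: 'i bb)) = 0"
      by (simp only: eval3_swap[OF fs_vs BL EQ])
  qed
  have Qall: "Q a b c" if "perm3 a b c" for a b c
  proof -
    have "Q 1 2 0" using QR[OF Q0] .
    moreover have "Q 2 0 1" using QR[OF \<open>Q 1 2 0\<close>] .
    moreover have "Q 1 0 2" using QS[OF Q0] .
    moreover have "Q 0 2 1" using QR[OF \<open>Q 1 0 2\<close>] .
    moreover have "Q 2 1 0" using QR[OF \<open>Q 0 2 1\<close>] .
    ultimately show ?thesis using Q0 perm3_cases[OF that] by auto
  qed
  have basis: "eval3 fs_scale nu u (e1 y1) (e1 y2) (e1 y3) = 0" for y1 y2 y3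
  proof (cases "\<exists>a b c. y1 = to_nat (G a :: 'i bb) \<and> y2 = to_nat (G b :: 'i bb) \<and> y3 = to_nat (G c :: 'i bb) \<and> perm3 a b c")
    case True
    then obtain a b c where abc: "y1 = to_nat (G a :: 'i bb)" "y2 = to_nat (G b :: 'i bb)" "y3 = to_nat (G c :: 'i bb)" "perm3 a b c"
      by blast
    then show ?thesis using Qall[OF abc(4)] u unfolding Q_def E_def by simp
  next
    case False
    then have "tree_eval nu i k c (e1 y1) (e1 y2) (e1 y3) = 0" for i k c
      using nuB_tree_nz[of D r i k c y1 y2 y3] unfolding nu_def by blast
    then show ?thesis unfolding eval3_def by simp
  qed
  show ?thesis unfolding D_def[symmetric] nu_def[symmetric]
    by (rule rel_from_basis[OF BL basis])
qed


context
  fixes scale :: "'k::field \<Rightarrow> 'a::ab_group_add \<Rightarrow> 'a"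
    and mu :: "'i::finite \<times> 'j::finite \<Rightarrow> 'a \<Rightarrow> 'a \<Rightarrow> 'a"
  assumes VS: "vector_space scale"
    and MU: "\<forall>ij. bilinear_op scale (mu ij)"
begin

interpretation V: vector_space scale by (rule VS)

lemma tops_tens:
  fixes nu :: "'i \<Rightarrow> ('y \<Rightarrow>\<^sub>0 'k) \<Rightarrow> ('y \<Rightarrow>\<^sub>0 'k) \<Rightarrow> ('y \<Rightarrow>\<^sub>0 'k)"
  assumes NU: "\<forall>i. bilinear_op fs_scale (nu i)"
  shows "lk (tensor_ops scale nu mu j (tens scale p a) (tens scale q b)) h =
     (\<Sum>i\<in>UNIV. scale (lk (nu i p q) h) (mu (i,j) a b))"
proof -
  have a2: "mu ij x (scale c y) = scale c (mu ij x y)" "mu ij x 0 = 0" for ij x y c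
    using MU unfolding bilinear_op_def apply blast
    using MU bil_zero2 by blast
  have kt: "pk (tens scale q b) \<subseteq> pk q" by (auto simp: in_keys_iff lookup_tens[OF VS])
  have "lk (tensor_ops scale nu mu j (tens scale p a) (tens scale q b)) h =
      (\<Sum>y\<in>pk (tens scale q b). \<Sum>i\<in>UNIV. scale (lk (nu i p (e1 y)) h) (mu (i,j) a (lk (tens scale q b) y)))"
    by (rule tops_pure1[OF VS MU NU])
  also have "\<dots> = (\<Sum>y\<in>pk q. \<Sum>i\<in>UNIV. scale (lk (nu i p (e1 y)) h) (mu (i,j) a (lk (tens scale q b) y)))"
    by (rule sum.mono_neutral_left) (use kt in \<open>auto simp: in_keys_iff a2\<close>)
  also have "\<dots> = (\<Sum>y\<in>pk q. \<Sum>i\<in>UNIV. scale (lk q y * lk (nu i p (e1 y)) h) (mu (i,j) a b))"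
    by (simp add: lookup_tens[OF VS] a2 mult.commute)
  also have "\<dots> = (\<Sum>i\<in>UNIV. \<Sum>y\<in>pk q. scale (lk q y * lk (nu i p (e1 y)) h) (mu (i,j) a b))"
    by (rule sum.swap)
  also have "\<dots> = (\<Sum>i\<in>UNIV. scale (lk (nu i p q) h) (mu (i,j) a b))"
  proof (rule sum.cong[OF refl])
    fix i
    have "nu i p q = (\<Sum>u\<in>pk q. fs_scale (lk q u) (nu i p (e1 u)))"
      by (rule fs_expand2[OF _ finite_keys order_refl]) (use NU in blast)
    then show "(\<Sum>y\<in>pk q. scale (lk q y * lk (nu i p (e1 y)) h) (mu (i,j) a b)) = scale (lk (nu i p q) h) (mu (i,j) a b)"
      by (simp add: lookup_sum V.scale_sum_left)
  qed
  finally show ?thesis .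
qed

lemma tops_tens_pm:
  fixes nu :: "'i \<Rightarrow> ('y \<Rightarrow>\<^sub>0 'k) \<Rightarrow> ('y \<Rightarrow>\<^sub>0 'k) \<Rightarrow> ('y \<Rightarrow>\<^sub>0 'k)"
  assumes NU: "\<forall>i. bilinear_op fs_scale (nu i)"
  shows "tensor_ops scale nu mu j (tens scale p a) (tens scale q b) = (\<Sum>i\<in>UNIV. tens scale (nu i p q) (mu (i,j) a b))"
  by (rule poly_mapping_eqI) (simp add: tops_tens[OF NU] lookup_sum lookup_tens[OF VS])

lemma tops_nested_tens:
  fixes nu :: "'i \<Rightarrow> ('y \<Rightarrow>\<^sub>0 'k) \<Rightarrow> ('y \<Rightarrow>\<^sub>0 'k) \<Rightarrow> ('y \<Rightarrow>\<^sub>0 'k)"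
  assumes NU: "\<forall>i. bilinear_op fs_scale (nu i)"
  shows "lk (tensor_ops scale nu mu j (tensor_ops scale nu mu l (tens scale p1 x1) (tens scale p2 x2)) (tens scale p3 x3)) h =
     (\<Sum>i\<in>UNIV. \<Sum>k\<in>UNIV. scale (lk (nu i (nu k p1 p2) p3) h) (mu (i,j) (mu (k,l) x1 x2) x3))"
proof -
  have B: "bilinear_op (tensor_scale scale) (tensor_ops scale nu mu j)" by (rule tops_bilinear[OF VS MU])
  have "lk (tensor_ops scale nu mu j (tensor_ops scale nu mu l (tens scale p1 x1) (tens scale p2 x2)) (tens scale p3 x3)) h
     = (\<Sum>k\<in>UNIV. \<Sum>i\<in>UNIV. scale (lk (nu i (nu k p1 p2) p3) h) (mu (i,j) (mu (k,l) x1 x2) x3))"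
    by (simp only: tops_tens_pm[OF NU] bil_sum1[OF B] lookup_sum tops_tens[OF NU] lookup_tens[OF VS])
  also have "\<dots> = (\<Sum>i\<in>UNIV. \<Sum>k\<in>UNIV. scale (lk (nu i (nu k p1 p2) p3) h) (mu (i,j) (mu (k,l) x1 x2) x3))"
    by (rule sum.swap)
  finally show ?thesis .
qed

lemma tops_tree_tens:
  fixes nu :: "'i \<Rightarrow> ('y \<Rightarrow>\<^sub>0 'k) \<Rightarrow> ('y \<Rightarrow>\<^sub>0 'k) \<Rightarrow> ('y \<Rightarrow>\<^sub>0 'k)"
  assumes NU: "\<forall>i. bilinear_op fs_scale (nu i)"
  shows "lk (tree_eval (tensor_ops scale nu mu) j l c (tens scale p1 x1) (tens scale p2 x2) (tens scale p3 x3)) h =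
     (\<Sum>i\<in>UNIV. \<Sum>k\<in>UNIV. scale (lk (tree_eval nu i k c p1 p2 p3) h) (tree_eval mu (i,j) (k,l) c x1 x2 x3))"
  by (cases c) (simp_all only: tree_eval.simps tops_nested_tens[OF NU])


lemma lookup_E: "lk (E b :: nat \<Rightarrow>\<^sub>0 'k::field) (to_nat b') = (if b = b' then 1 else 0)"
  by (simp add: E_def lookup_single)

lemma bwd:
  fixes sigV :: "'i \<Rightarrow> 'i \<Rightarrow> 'k" and sigW :: "'j \<Rightarrow> 'j \<Rightarrow> 'k"
  assumes OV: "bin_quad_operad sigV R" and OW: "bin_quad_operad sigW S"
    and HY: "\<forall>nu :: 'i \<Rightarrow> (nat \<Rightarrow>\<^sub>0 'k) \<Rightarrow> (nat \<Rightarrow>\<^sub>0 'k) \<Rightarrow> (nat \<Rightarrow>\<^sub>0 'k).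
               is_algebra fs_scale (dual_gen sigV) (orth R) nu \<longrightarrow>
               is_algebra (tensor_scale scale) sigW S (tensor_ops scale nu mu)"
  shows "is_algebra scale (black_gen sigV sigW) (black_rel R S) mu"
proof -
  define D where "D = dual_gen sigV"
  have s2: "s2_module sigV" using OV unfolding bin_quad_operad_def by blast
  have linR: "lin_subspace R" using OV unfolding bin_quad_operad_def by blast
  have DD: "(\<Sum>b\<in>UNIV. D a b * D b c) = (if a = c then 1 else 0)" for a c
    unfolding D_def by (rule dualDD[OF s2])
  have NUr: "\<forall>i. bilinear_op fs_scale (nuB D r i)" for r by (rule nuB_bil)
  have PA: "is_algebra fs_scale D (orth R) (nuB D r)" if "r \<in> R" for r
    unfolding is_algebra_def
  proof (intro conjI allI ballI)
    fix i show "bilinear_op fs_scale (nuB D r i)" using nuB_bil by blast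
  next
    fix i x y show "(\<Sum>i'\<in>UNIV. fs_scale (D i' i) (nuB D r i' x y)) = nuB D r i y x"
      by (rule nuB_equiv[OF DD])
  next
    fix u x1 x2 x3 assume "u \<in> orth R"
    then show "eval3 fs_scale (nuB D r) u x1 x2 x3 = 0" unfolding D_def by (rule nuB_rel[OF OV that])
  qed
  have TA: "is_algebra (tensor_scale scale) sigW S (tensor_ops scale (nuB D r) mu)" if "r \<in> R" for r
    using HY PA[OF that] unfolding D_def by blast
  have r0: "(\<lambda>i k c. 0) \<in> R" using linR unfolding lin_subspace_def by blast
  define r0 :: "('i, 'k) tree3" where "r0 = (\<lambda>i k c. 0)"
  have star: "(\<Sum>j'\<in>UNIV. scale (sigW j' j) (mu (i0, j') a b)) = (\<Sum>i\<in>UNIV. scale (D i0 i) (mu (i, j) b a))"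
    for i0 j a b
  proof -
    let ?nu = "nuB D r0"
    let ?T = "tens scale (E (G 0 :: 'i bb) :: nat \<Rightarrow>\<^sub>0 'k) a" and ?T' = "tens scale (E (G 1 :: 'i bb) :: nat \<Rightarrow>\<^sub>0 'k) b"
    let ?h = "to_nat (H i0 0 1 :: 'i bb)"
    have eq: "(\<Sum>j'\<in>UNIV. tensor_scale scale (sigW j' j) (tensor_ops scale ?nu mu j' ?T ?T')) = tensor_ops scale ?nu mu j ?T' ?T"
      using TA[OF r0] unfolding is_algebra_def r0_def by blast
    have "lk (\<Sum>j'\<in>UNIV. tensor_scale scale (sigW j' j) (tensor_ops scale ?nu mu j' ?T ?T')) ?h
        = (\<Sum>j'\<in>UNIV. scale (sigW j' j) (\<Sum>i\<in>UNIV. scale (if i = i0 then 1 else 0) (mu (i, j') a b)))"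
      by (simp add: lookup_sum lookup_tensor_scale[OF VS] tops_tens[OF NUr] nuB_basis lookup_E)
    also have "\<dots> = (\<Sum>j'\<in>UNIV. scale (sigW j' j) (mu (i0, j') a b))"
      by (simp add: if_distrib[of "\<lambda>x. scale x _"] cong: if_cong)
    finally have L: "lk (\<Sum>j'\<in>UNIV. tensor_scale scale (sigW j' j) (tensor_ops scale ?nu mu j' ?T ?T')) ?h
        = (\<Sum>j'\<in>UNIV. scale (sigW j' j) (mu (i0, j') a b))" .
    have "lk (tensor_ops scale ?nu mu j ?T' ?T) ?h = (\<Sum>i\<in>UNIV. scale (lk (\<Sum>k'\<in>UNIV. fs_scale (D k' i) (E (H k' 0 1 :: 'i bb))) ?h) (mu (i, j) b a))"
      by (simp add: tops_tens[OF NUr] nuB_basis)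
    also have "\<dots> = (\<Sum>i\<in>UNIV. scale (D i0 i) (mu (i, j) b a))"
      by (simp add: lookup_sum lookup_E if_distrib[of "\<lambda>x. _ * x"] cong: if_cong)
    finally show ?thesis using L eq by simp
  qed
  show ?thesis unfolding is_algebra_def
  proof (intro conjI allI ballI)
    fix ij show "bilinear_op scale (mu ij)" using MU by blast
  next
    fix ij :: "'i \<times> 'j" and x y :: 'a
    obtain i j where ij: "ij = (i, j)" by (cases ij)
    have d: "(\<Sum>i'\<in>UNIV. - sigV i' i * D i' i'') = (if i'' = i then 1 else 0)" for i''
    proof -
      have "(\<Sum>i'\<in>UNIV. - sigV i' i * D i' i'') = (\<Sum>i'\<in>UNIV. sigV i'' i' * sigV i' i)"
        unfolding D_def dual_gen_def by (simp add: mult.commute)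
      then show ?thesis using s2 unfolding s2_module_def by simp
    qed
    have "(\<Sum>p\<in>UNIV. scale (black_gen sigV sigW p ij) (mu p x y))
        = (\<Sum>i'\<in>UNIV. scale (- sigV i' i) (\<Sum>j'\<in>UNIV. scale (sigW j' j) (mu (i', j') x y)))"
      unfolding ij by (simp add: sum_UNIV_prod black_gen_def V.scale_sum_right)
    also have "\<dots> = (\<Sum>i'\<in>UNIV. scale (- sigV i' i) (\<Sum>i''\<in>UNIV. scale (D i' i'') (mu (i'', j) y x)))"
      by (simp only: star)
    also have "\<dots> = (\<Sum>i''\<in>UNIV. scale (\<Sum>i'\<in>UNIV. - sigV i' i * D i' i'') (mu (i'', j) y x))"
      apply (simp only: V.scale_sum_right V.scale_scale V.scale_sum_left)
      by (rule sum.swap)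
    also have "\<dots> = mu ij y x"
      unfolding d ij by (simp add: if_distrib[of "\<lambda>c. scale c _"] cong: if_cong)
    finally show "(\<Sum>p\<in>UNIV. scale (black_gen sigV sigW p ij) (mu p x y)) = mu ij y x" .
  next
    fix rho x1 x2 x3 assume rho: "rho \<in> black_rel R S"
    define U where "U = {rho. \<forall>x1 x2 x3. eval3 scale mu rho x1 x2 x3 = 0}"
    have gen: "(\<lambda>(i, j) (k, l) c. r i k c * s j l c) \<in> U" if rR: "r \<in> R" and sS: "s \<in> S" for r s
      unfolding U_def
    proof (intro CollectI allI)
      fix x1 x2 x3
      let ?nu = "nuB D r"
      let ?T1 = "tens scale (E (G 0 :: 'i bb) :: nat \<Rightarrow>\<^sub>0 'k) x1"
      let ?T2 = "tens scale (E (G 1 :: 'i bb) :: nat \<Rightarrow>\<^sub>0 'k) x2"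
      let ?T3 = "tens scale (E (G 2 :: 'i bb) :: nat \<Rightarrow>\<^sub>0 'k) x3"
      let ?h = "to_nat (Z :: 'i bb)"
      have z: "eval3 (tensor_scale scale) (tensor_ops scale ?nu mu) s ?T1 ?T2 ?T3 = 0"
        using TA[OF rR] sS unfolding is_algebra_def by blast
      have tv: "lk (tree_eval ?nu i k c (E (G 0 :: 'i bb)) (E (G 1 :: 'i bb)) (E (G 2 :: 'i bb))) ?h = r i k c" for i k c
        by (subst nuB_id[OF DD]) (simp add: lookup_E)
      have "lk (eval3 (tensor_scale scale) (tensor_ops scale ?nu mu) s ?T1 ?T2 ?T3) ?h
          = (\<Sum>j\<in>UNIV. \<Sum>l\<in>UNIV. \<Sum>c\<in>shapes. scale (s j l c) (\<Sum>i\<in>UNIV. \<Sum>k\<in>UNIV.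
              scale (r i k c) (tree_eval mu (i,j) (k,l) c x1 x2 x3)))"
        unfolding eval3_def by (simp only: lookup_sum lookup_tensor_scale[OF VS] tops_tree_tens[OF NUr] tv)
      also have "\<dots> = eval3 scale mu (\<lambda>(i, j) (k, l) c. r i k c * s j l c) x1 x2 x3"
        by (rule eval3_black[OF VS MU, symmetric])
      finally show "eval3 scale mu (\<lambda>(i, j) (k, l) c. r i k c * s j l c) x1 x2 x3 = 0"
        using z by simp
    qed
    have sub: "lin_subspace U" unfolding lin_subspace_def U_def
    proof (intro conjI ballI allI CollectI)
      fix x1 x2 x3 show "eval3 scale mu (\<lambda>i k s. 0) x1 x2 x3 = 0" by (simp add: eval3_def)
    next
      fix a b x1 x2 x3
      assume a: "a \<in> {rho. \<forall>x1 x2 x3. eval3 scale mu rho x1 x2 x3 = 0}"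
        and b: "b \<in> {rho. \<forall>x1 x2 x3. eval3 scale mu rho x1 x2 x3 = 0}"
      have "eval3 scale mu (\<lambda>i k s. a i k s + b i k s) x1 x2 x3 = eval3 scale mu a x1 x2 x3 + eval3 scale mu b x1 x2 x3"
        unfolding eval3_def by (simp add: V.scale_left_distrib sum.distrib)
      then show "eval3 scale mu (\<lambda>i k s. a i k s + b i k s) x1 x2 x3 = 0" using a b by simp
    next
      fix c a x1 x2 x3
      assume a: "a \<in> {rho. \<forall>x1 x2 x3. eval3 scale mu rho x1 x2 x3 = 0}"
      have "eval3 scale mu (\<lambda>i k s. c * a i k s) x1 x2 x3 = scale c (eval3 scale mu a x1 x2 x3)"
        unfolding eval3_def by (simp add: V.scale_sum_right V.scale_scale)
      then show "eval3 scale mu (\<lambda>i k s. c * a i k s) x1 x2 x3 = 0" using a by simp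
    qed
    have "black_rel R S \<subseteq> U" unfolding black_rel_def lin_span_def
      using sub gen by blast
    then show "eval3 scale mu rho x1 x2 x3 = 0" using rho unfolding U_def by blast
  qed
qed

end


theorem mainTheorem3:
  fixes sigV :: "'i::finite \<Rightarrow> 'i \<Rightarrow> 'k::field" and R :: "('i, 'k) tree3 set"
    and sigW :: "'j::finite \<Rightarrow> 'j \<Rightarrow> 'k" and S :: "('j, 'k) tree3 set"
    and scale :: "'k \<Rightarrow> 'a::ab_group_add \<Rightarrow> 'a"
    and mu :: "'i \<times> 'j \<Rightarrow> 'a \<Rightarrow> 'a \<Rightarrow> 'a"
  assumes "bin_quad_operad sigV R" and "bin_quad_operad sigW S"
    and "vector_space scale"
    and "\<forall>ij. bilinear_op scale (mu ij)"
  shows "(is_algebra scale (black_gen sigV sigW) (black_rel R S) mu \<longleftrightarrow>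
            (\<forall>nu :: 'i \<Rightarrow> (nat \<Rightarrow>\<^sub>0 'k) \<Rightarrow> (nat \<Rightarrow>\<^sub>0 'k) \<Rightarrow> (nat \<Rightarrow>\<^sub>0 'k).
               is_algebra fs_scale (dual_gen sigV) (orth R) nu \<longrightarrow>
               is_algebra (tensor_scale scale) sigW S (tensor_ops scale nu mu)))
       \<and> (is_algebra scale (black_gen sigV sigW) (black_rel R S) mu \<longrightarrow>
            (\<forall>nu :: 'i \<Rightarrow> ('y \<Rightarrow>\<^sub>0 'k) \<Rightarrow> ('y \<Rightarrow>\<^sub>0 'k) \<Rightarrow> ('y \<Rightarrow>\<^sub>0 'k).
               is_algebra fs_scale (dual_gen sigV) (orth R) nu \<longrightarrow>
               is_algebra (tensor_scale scale) sigW S (tensor_ops scale nu mu)))"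
proof (intro conjI)
  show "is_algebra scale (black_gen sigV sigW) (black_rel R S) mu \<longleftrightarrow>
            (\<forall>nu :: 'i \<Rightarrow> (nat \<Rightarrow>\<^sub>0 'k) \<Rightarrow> (nat \<Rightarrow>\<^sub>0 'k) \<Rightarrow> (nat \<Rightarrow>\<^sub>0 'k).
               is_algebra fs_scale (dual_gen sigV) (orth R) nu \<longrightarrow>
               is_algebra (tensor_scale scale) sigW S (tensor_ops scale nu mu))"
  proof
    assume A: "is_algebra scale (black_gen sigV sigW) (black_rel R S) mu"
    show "\<forall>nu :: 'i \<Rightarrow> (nat \<Rightarrow>\<^sub>0 'k) \<Rightarrow> (nat \<Rightarrow>\<^sub>0 'k) \<Rightarrow> (nat \<Rightarrow>\<^sub>0 'k).
               is_algebra fs_scale (dual_gen sigV) (orth R) nu \<longrightarrow>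
               is_algebra (tensor_scale scale) sigW S (tensor_ops scale nu mu)"
      using fwd[OF assms(3) assms(4) assms(1) assms(2) A] by blast
  next
    assume "\<forall>nu :: 'i \<Rightarrow> (nat \<Rightarrow>\<^sub>0 'k) \<Rightarrow> (nat \<Rightarrow>\<^sub>0 'k) \<Rightarrow> (nat \<Rightarrow>\<^sub>0 'k).
               is_algebra fs_scale (dual_gen sigV) (orth R) nu \<longrightarrow>
               is_algebra (tensor_scale scale) sigW S (tensor_ops scale nu mu)"
    then show "is_algebra scale (black_gen sigV sigW) (black_rel R S) mu"
      by (rule bwd[OF assms(3) assms(4) assms(1) assms(2)])
  qed
next
  show "is_algebra scale (black_gen sigV sigW) (black_rel R S) mu \<longrightarrow>
            (\<forall>nu :: 'i \<Rightarrow> ('y \<Rightarrow>\<^sub>0 'k) \<Rightarrow> ('y \<Rightarrow>\<^sub>0 'k) \<Rightarrow> ('y \<Rightarrow>\<^sub>0 'k).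
               is_algebra fs_scale (dual_gen sigV) (orth R) nu \<longrightarrow>
               is_algebra (tensor_scale scale) sigW S (tensor_ops scale nu mu))"
    using fwd[OF assms(3) assms(4) assms(1) assms(2)] by blast
qed

end
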